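(* Let $n\ge3$, let $[\mathcal H:\partial]$, $[\mathcal G:\delta]$ be reduced $n$-crossed complexes and $([\mathcal E:\eta],p,f,\alpha,\beta)$ an $n$-butterfly from $\mathcal H$ to $\mathcal G$. If $[\mathcal Q:\xi]$ is a cofibrant replacement of $\mathcal H$ via a trivial fibration $q:\mathcal Q\to\mathcal H$, then there exists a weak equivalence $l:\mathcal Q\to\mathcal E^*$ with $p^*\circ l=q$.
   Context: A reduced $m$-crossed complex $[C:\partial]$ is a sequence of groups and homomorphisms $C_m\xrightarrow{\partial_m}\cdots\xrightarrow{\partial_2}C_1$ with an action of $C_1$ on each $C_k$ ($k\ge2$), such that $\partial_2$ is a crossed module, $C_k$ is abelian for $k\ge3$, each $\partial_k$ is $C_1$-equivariant, $\partial_{k-1}\partial_k$ is trivial, and $\partial_2(C_2)$ acts trivially on $C_k$ for $k\ge3$; morphisms commute with differentials and actions. $C_{\le m-1}$ is the truncation dropping degree $m$. The category of reduced $n$-crossed complexes carries a model structure in which weak equivalences are morphisms inducing isomorphisms on $\pi_1=C_1/\operatorname{im}\partial_2$, $\pi_k=\ker\partial_k/\operatorname{im}\partial_{k+1}$ ($2\le k\le n-1$), $\pi_n=\ker\partial_n$, and fibrations are degreewise surjections; cofibrant objects are those with the left lifting property against trivial fibrations, and a cofibrant replacement of $\mathcal H$ is a cofibrant $\mathcal Q$ with a trivial fibration $\mathcal Q\to\mathcal H$. An $n$-butterfly $([\mathcal E:\eta],p,f,\alpha,\beta)$ from $[\mathcal H:\partial]$ to $[\mathcal G:\delta]$ consists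 of a reduced $(n-1)$-crossed complex $[\mathcal E:\eta]$, morphisms $p:\mathcal E\to\mathcal H_{\le n-1}$, $f:\mathcal E\to\mathcal G_{\le n-1}$, and homomorphisms $\alpha:\mathcal H_n\to\mathcal E_{n-1}$, $\beta:\mathcal G_n\to\mathcal E_{n-1}$ with $p_{n-1}\alpha=\partial_n$, $f_{n-1}\beta=\delta_n$, such that: (B2) $1\to\mathcal G_n\xrightarrow{\beta}\mathcal E_{n-1}\xrightarrow{u_{n-1}}\ker\eta_{n-2}\times_{\ker\partial_{n-2}}\mathcal H_{n-1}\to1$ is exact and $u_k:\mathcal E_k\to\ker\eta_{k-1}\times_{\ker\partial_{k-1}}\mathcal H_k$ is surjective for $k\le n-2$, where $u_k(x)=(\eta_k(x),p_k(x))$, the target being the fibre product of $p_{k-1}:\ker\eta_{k-1}\to\ker\partial_{k-1}$ and $\partial_k$ (conventions $\ker\eta_0=\ker\partial_0=1$, $\ker\eta_1=\mathcal E_1$, $\ker\partial_1=\mathcal H_1$); (B3) $\eta_{n-1}\circ(\alpha\times\beta)$ and $f_{n-1}\circ\alpha$ are trivial, $(\alpha\times\beta)(x,y)=\alpha(x)\beta(y)$; (B4) $\alpha(x^{p_1(a)})=\alpha(x)^a$, $\beta(y^{f_1(a)})=\beta(y)^a$ for $a\in\mathcal E_1$. Then $[\mathcal E^*:\eta^*]$: $\mathcal H_n\times\mathcal G_n\xrightarrow{\alpha\times\beta}\mathcal E_{n-1}\xrightarrow{\eta_{n-1}}\cdots\to\mathcal E_1$ is a reduced $n$-crossed complex and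 $p^*:\mathcal E^*\to\mathcal H$ is the projection in degree $n$ and $p$ below. *)

theory Defs
  imports "HOL-Algebra.Algebra"
begin

(* A (reduced) crossed complex with all groups having elements of type 'a.
   grp C k = the group C_k (k >= 1), bd C k = the differential C_k -> C_(k-1) (k >= 2),
   act C k x a = x^a, the right action of a in C_1 on x in C_k (k >= 2). *)
record 'a xcx =
  grp :: "nat \<Rightarrow> 'a monoid"
  bd  :: "nat \<Rightarrow> 'a \<Rightarrow> 'a"
  act :: "nat \<Rightarrow> 'a \<Rightarrow> 'a \<Rightarrow> 'a"

definition rcc :: "nat \<Rightarrow> 'a xcx \<Rightarrow> bool" where
"rcc m C \<longleftrightarrow> 1 \<le> m \<and>
  (\<forall>k\<in>{1..m}. group (grp C k)) \<and>
  (\<forall>k\<in>{3..m}. comm_group (grp C k)) \<and>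
  (\<forall>k\<in>{2..m}. bd C k \<in> hom (grp C k) (grp C (k-1))) \<and>
  (\<forall>k\<in>{2..m}. \<forall>a\<in>carrier (grp C 1). (\<lambda>x. act C k x a) \<in> hom (grp C k) (grp C k)) \<and>
  (\<forall>k\<in>{2..m}. \<forall>x\<in>carrier (grp C k). act C k x \<one>\<^bsub>grp C 1\<^esub> = x) \<and>
  (\<forall>k\<in>{2..m}. \<forall>x\<in>carrier (grp C k). \<forall>a\<in>carrier (grp C 1). \<forall>b\<in>carrier (grp C 1).
      act C k (act C k x a) b = act C k x (a \<otimes>\<^bsub>grp C 1\<^esub> b)) \<and>
  (2 \<le> m \<longrightarrow>
     (\<forall>x\<in>carrier (grp C 2). \<forall>a\<in>carrier (grp C 1).
        bd C 2 (act C 2 x a) = inv\<^bsub>grp C 1\<^esub> a \<otimes>\<^bsub>grp C 1\<^esub> bd C 2 x \<otimes>\<^bsub>grp C 1\<^esub> a) \<and>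
     (\<forall>x\<in>carrier (grp C 2). \<forall>y\<in>carrier (grp C 2).
        act C 2 x (bd C 2 y) = inv\<^bsub>grp C 2\<^esub> y \<otimes>\<^bsub>grp C 2\<^esub> x \<otimes>\<^bsub>grp C 2\<^esub> y)) \<and>
  (\<forall>k\<in>{3..m}. \<forall>x\<in>carrier (grp C k). \<forall>a\<in>carrier (grp C 1).
      bd C k (act C k x a) = act C (k-1) (bd C k x) a) \<and>
  (\<forall>k\<in>{3..m}. \<forall>x\<in>carrier (grp C k). bd C (k-1) (bd C k x) = \<one>\<^bsub>grp C (k-2)\<^esub>) \<and>
  (\<forall>k\<in>{3..m}. \<forall>x\<in>carrier (grp C k). \<forall>y\<in>carrier (grp C 2). act C k x (bd C 2 y) = x)"

definition ccmor :: "nat \<Rightarrow> 'a xcx \<Rightarrow> 'b xcx \<Rightarrow> (nat \<Rightarrow> 'a \<Rightarrow> 'b) \<Rightarrow> bool" where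
"ccmor m C D g \<longleftrightarrow>
  (\<forall>k\<in>{1..m}. g k \<in> hom (grp C k) (grp D k)) \<and>
  (\<forall>k\<in>{2..m}. \<forall>x\<in>carrier (grp C k). g (k-1) (bd C k x) = bd D k (g k x)) \<and>
  (\<forall>k\<in>{2..m}. \<forall>x\<in>carrier (grp C k). \<forall>a\<in>carrier (grp C 1).
      g k (act C k x a) = act D k (g k x) (g 1 a))"

definition cyc :: "'a xcx \<Rightarrow> nat \<Rightarrow> 'a set" where
"cyc C k = (if k = 1 then carrier (grp C 1)
            else {x\<in>carrier (grp C k). bd C k x = \<one>\<^bsub>grp C (k-1)\<^esub>})"

definition bdry :: "nat \<Rightarrow> 'a xcx \<Rightarrow> nat \<Rightarrow> 'a set" where
"bdry m C k = (if k = m then {\<one>\<^bsub>grp C k\<^esub>} else bd C (k+1) ` carrier (grp C (k+1)))"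

definition htpy :: "nat \<Rightarrow> 'a xcx \<Rightarrow> nat \<Rightarrow> 'a set monoid" where
"htpy m C k = ((grp C k)\<lparr>carrier := cyc C k\<rparr>) Mod (bdry m C k)"

definition htpy_map :: "nat \<Rightarrow> 'b xcx \<Rightarrow> (nat \<Rightarrow> 'a \<Rightarrow> 'b) \<Rightarrow> nat \<Rightarrow> 'a set \<Rightarrow> 'b set" where
"htpy_map m D g k S = (\<Union>x\<in>S. bdry m D k #>\<^bsub>grp D k\<^esub> g k x)"

definition weak_eq :: "nat \<Rightarrow> 'a xcx \<Rightarrow> 'b xcx \<Rightarrow> (nat \<Rightarrow> 'a \<Rightarrow> 'b) \<Rightarrow> bool" where
"weak_eq m C D g \<longleftrightarrow> ccmor m C D g \<and>
  (\<forall>k\<in>{1..m}. htpy_map m D g k \<in> iso (htpy m C k) (htpy m D k))"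

definition fibration :: "nat \<Rightarrow> 'a xcx \<Rightarrow> 'b xcx \<Rightarrow> (nat \<Rightarrow> 'a \<Rightarrow> 'b) \<Rightarrow> bool" where
"fibration m C D g \<longleftrightarrow> ccmor m C D g \<and>
  (\<forall>k\<in>{1..m}. g k ` carrier (grp C k) = carrier (grp D k))"

definition triv_fib :: "nat \<Rightarrow> 'a xcx \<Rightarrow> 'b xcx \<Rightarrow> (nat \<Rightarrow> 'a \<Rightarrow> 'b) \<Rightarrow> bool" where
"triv_fib m C D g \<longleftrightarrow> fibration m C D g \<and> weak_eq m C D g"

(* Cofibrancy = left lifting property of (trivial complex -> Q) against all trivial
   fibrations A -> B.  Since HOL cannot quantify over types inside a formula, the
   complexes A and B range over complexes with element types 'a and 'b. *)
definition cofibrant_wrt :: "'a itself \<Rightarrow> 'b itself \<Rightarrow> nat \<Rightarrow> 'q xcx \<Rightarrow> bool" where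
"cofibrant_wrt _ _ m Q \<longleftrightarrow> rcc m Q \<and>
  (\<forall>(A::'a xcx) (B::'b xcx) t g.
     rcc m A \<and> rcc m B \<and> triv_fib m A B t \<and> ccmor m Q B g \<longrightarrow>
     (\<exists>h. ccmor m Q A h \<and> (\<forall>k\<in>{1..m}. \<forall>x\<in>carrier (grp Q k). t k (h k x) = g k x)))"

definition fibprod :: "'e xcx \<Rightarrow> 'h xcx \<Rightarrow> (nat \<Rightarrow> 'e \<Rightarrow> 'h) \<Rightarrow> nat \<Rightarrow> ('e \<times> 'h) set" where
"fibprod E H p k = {(e, h). e \<in> cyc E (k-1) \<and> h \<in> carrier (grp H k) \<and> p (k-1) e = bd H k h}"

(* surjectivity of u_k (for k = 1 the target is H_1 and u_1 = p_1) *)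
definition u_surj :: "'e xcx \<Rightarrow> 'h xcx \<Rightarrow> (nat \<Rightarrow> 'e \<Rightarrow> 'h) \<Rightarrow> nat \<Rightarrow> bool" where
"u_surj E H p k \<longleftrightarrow> (if k = 1 then p 1 ` carrier (grp E 1) = carrier (grp H 1)
   else (\<lambda>x. (bd E k x, p k x)) ` carrier (grp E k) = fibprod E H p k)"

definition butterfly :: "nat \<Rightarrow> 'h xcx \<Rightarrow> 'g xcx \<Rightarrow> 'e xcx \<Rightarrow> (nat \<Rightarrow> 'e \<Rightarrow> 'h) \<Rightarrow>
    (nat \<Rightarrow> 'e \<Rightarrow> 'g) \<Rightarrow> ('h \<Rightarrow> 'e) \<Rightarrow> ('g \<Rightarrow> 'e) \<Rightarrow> bool" where
"butterfly n H G E p f \<alpha> \<beta> \<longleftrightarrow>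
  rcc (n-1) E \<and> ccmor (n-1) E H p \<and> ccmor (n-1) E G f \<and>
  \<alpha> \<in> hom (grp H n) (grp E (n-1)) \<and> \<beta> \<in> hom (grp G n) (grp E (n-1)) \<and>
  (\<forall>x\<in>carrier (grp H n). p (n-1) (\<alpha> x) = bd H n x) \<and>
  (\<forall>y\<in>carrier (grp G n). f (n-1) (\<beta> y) = bd G n y) \<and>
  \<comment> \<open>(B2)\<close>
  (\<forall>k\<in>{1..n-2}. u_surj E H p k) \<and>
  u_surj E H p (n-1) \<and>
  inj_on \<beta> (carrier (grp G n)) \<and>
  \<beta> ` carrier (grp G n) = {x\<in>carrier (grp E (n-1)).
       bd E (n-1) x = \<one>\<^bsub>grp E (n-2)\<^esub> \<and> p (n-1) x = \<one>\<^bsub>grp H (n-1)\<^esub>} \<and>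
  \<comment> \<open>(B3)\<close>
  (\<forall>x\<in>carrier (grp H n). \<forall>y\<in>carrier (grp G n).
      bd E (n-1) (\<alpha> x \<otimes>\<^bsub>grp E (n-1)\<^esub> \<beta> y) = \<one>\<^bsub>grp E (n-2)\<^esub>) \<and>
  (\<forall>x\<in>carrier (grp H n). f (n-1) (\<alpha> x) = \<one>\<^bsub>grp G (n-1)\<^esub>) \<and>
  \<comment> \<open>(B4)\<close>
  (\<forall>a\<in>carrier (grp E 1). \<forall>x\<in>carrier (grp H n). \<alpha> (act H n x (p 1 a)) = act E (n-1) (\<alpha> x) a) \<and>
  (\<forall>a\<in>carrier (grp E 1). \<forall>y\<in>carrier (grp G n). \<beta> (act G n y (f 1 a)) = act E (n-1) (\<beta> y) a)"

(* The n-crossed complex E^*: degree n is H_n x G_n (tagged Inr), degrees < n are E_k (tagged Inl). *)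
definition Estar :: "nat \<Rightarrow> 'h xcx \<Rightarrow> 'g xcx \<Rightarrow> 'e xcx \<Rightarrow> (nat \<Rightarrow> 'e \<Rightarrow> 'h) \<Rightarrow>
    (nat \<Rightarrow> 'e \<Rightarrow> 'g) \<Rightarrow> ('h \<Rightarrow> 'e) \<Rightarrow> ('g \<Rightarrow> 'e) \<Rightarrow> ('e + 'h \<times> 'g) xcx" where
"Estar n H G E p f \<alpha> \<beta> = \<lparr>
   grp = (\<lambda>k. if k = n then
      \<lparr>carrier = Inr ` (carrier (grp H n) \<times> carrier (grp G n)),
       monoid.mult = (\<lambda>a b. Inr (fst (projr a) \<otimes>\<^bsub>grp H n\<^esub> fst (projr b),
                           snd (projr a) \<otimes>\<^bsub>grp G n\<^esub> snd (projr b))),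
       monoid.one = Inr (\<one>\<^bsub>grp H n\<^esub>, \<one>\<^bsub>grp G n\<^esub>)\<rparr>
    else
      \<lparr>carrier = Inl ` carrier (grp E k),
       monoid.mult = (\<lambda>a b. Inl (projl a \<otimes>\<^bsub>grp E k\<^esub> projl b)),
       monoid.one = Inl \<one>\<^bsub>grp E k\<^esub>\<rparr>),
   bd = (\<lambda>k z. if k = n then Inl (\<alpha> (fst (projr z)) \<otimes>\<^bsub>grp E (n-1)\<^esub> \<beta> (snd (projr z)))
               else Inl (bd E k (projl z))),
   act = (\<lambda>k z a. if k = n then Inr (act H n (fst (projr z)) (p 1 (projl a)),
                                     act G n (snd (projr z)) (f 1 (projl a)))
                  else Inl (act E k (projl z) (projl a))) \<rparr>"

definition pstar :: "nat \<Rightarrow> (nat \<Rightarrow> 'e \<Rightarrow> 'h) \<Rightarrow> nat \<Rightarrow> ('e + 'h \<times> 'g) \<Rightarrow> 'h" where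
"pstar n p k z = (if k = n then fst (projr z) else p k (projl z))"

end

theory Submission
  imports Defs
begin



lemma rcc_group: "rcc m C \<Longrightarrow> 1 \<le> k \<Longrightarrow> k \<le> m \<Longrightarrow> group (grp C k)"
  unfolding rcc_def by auto

lemma rcc_bd_hom: "rcc m C \<Longrightarrow> 2 \<le> k \<Longrightarrow> k \<le> m \<Longrightarrow> bd C k \<in> hom (grp C k) (grp C (k-1))"
  unfolding rcc_def by auto

lemma rcc_bdbd: "rcc m C \<Longrightarrow> 3 \<le> k \<Longrightarrow> k \<le> m \<Longrightarrow> x \<in> carrier (grp C k) \<Longrightarrow>
   bd C (k-1) (bd C k x) = \<one>\<^bsub>grp C (k-2)\<^esub>"
  unfolding rcc_def by auto

lemma rcc_act_hom: "rcc m C \<Longrightarrow> 2 \<le> k \<Longrightarrow> k \<le> m \<Longrightarrow> a \<in> carrier (grp C 1) \<Longrightarrow>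
   (\<lambda>x. act C k x a) \<in> hom (grp C k) (grp C k)"
  unfolding rcc_def by auto

lemma rcc_act_one: "rcc m C \<Longrightarrow> 2 \<le> k \<Longrightarrow> k \<le> m \<Longrightarrow> x \<in> carrier (grp C k) \<Longrightarrow>
   act C k x \<one>\<^bsub>grp C 1\<^esub> = x"
  unfolding rcc_def by auto

lemma rcc_act_comp: "rcc m C \<Longrightarrow> 2 \<le> k \<Longrightarrow> k \<le> m \<Longrightarrow> x \<in> carrier (grp C k) \<Longrightarrow>
   a \<in> carrier (grp C 1) \<Longrightarrow> b \<in> carrier (grp C 1) \<Longrightarrow>
   act C k (act C k x a) b = act C k x (a \<otimes>\<^bsub>grp C 1\<^esub> b)"
  unfolding rcc_def by auto

lemma rcc_cm1: "rcc m C \<Longrightarrow> 2 \<le> m \<Longrightarrow> x \<in> carrier (grp C 2) \<Longrightarrow> a \<in> carrier (grp C 1) \<Longrightarrow>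
   bd C 2 (act C 2 x a) = inv\<^bsub>grp C 1\<^esub> a \<otimes>\<^bsub>grp C 1\<^esub> bd C 2 x \<otimes>\<^bsub>grp C 1\<^esub> a"
  unfolding rcc_def by auto

lemma rcc_cm2: "rcc m C \<Longrightarrow> 2 \<le> m \<Longrightarrow> x \<in> carrier (grp C 2) \<Longrightarrow> y \<in> carrier (grp C 2) \<Longrightarrow>
   act C 2 x (bd C 2 y) = inv\<^bsub>grp C 2\<^esub> y \<otimes>\<^bsub>grp C 2\<^esub> x \<otimes>\<^bsub>grp C 2\<^esub> y"
  unfolding rcc_def by auto

lemma rcc_bd_act: "rcc m C \<Longrightarrow> 3 \<le> k \<Longrightarrow> k \<le> m \<Longrightarrow> x \<in> carrier (grp C k) \<Longrightarrow> a \<in> carrier (grp C 1) \<Longrightarrow>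
   bd C k (act C k x a) = act C (k-1) (bd C k x) a"
  unfolding rcc_def by auto

lemma rcc_triv: "rcc m C \<Longrightarrow> 3 \<le> k \<Longrightarrow> k \<le> m \<Longrightarrow> x \<in> carrier (grp C k) \<Longrightarrow> y \<in> carrier (grp C 2) \<Longrightarrow>
   act C k x (bd C 2 y) = x"
  unfolding rcc_def by auto

lemma rcc_comm: "rcc m C \<Longrightarrow> 3 \<le> k \<Longrightarrow> k \<le> m \<Longrightarrow> comm_group (grp C k)"
  unfolding rcc_def by auto

lemma cyc_subgroup:
  assumes "rcc m C" "1 \<le> k" "k \<le> m" shows "subgroup (cyc C k) (grp C k)"
proof (cases "k = 1")
  case True
  then show ?thesis using rcc_group[OF assms] by (simp add: cyc_def group.subgroup_self)
next
  case False
  then have k2: "2 \<le> k" using assms by auto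
  have "group_hom (grp C k) (grp C (k-1)) (bd C k)"
    using rcc_group[OF assms(1)] rcc_bd_hom[OF assms(1) k2 assms(3)] assms k2
    by (simp add: group_hom_def group_hom_axioms_def)
  moreover have "cyc C k = kernel (grp C k) (grp C (k-1)) (bd C k)"
    using k2 unfolding cyc_def kernel_def by auto
  ultimately show ?thesis using group_hom.subgroup_kernel by metis
qed

lemma cyc_carrier: "rcc m C \<Longrightarrow> 1 \<le> k \<Longrightarrow> k \<le> m \<Longrightarrow> y \<in> cyc C k \<Longrightarrow> y \<in> carrier (grp C k)"
  using cyc_subgroup subgroup.subset by blast

lemma bdry_subgroup:
  assumes "rcc m C" "1 \<le> k" "k \<le> m"
  shows "subgroup (bdry m C k) (grp C k) \<and> bdry m C k \<subseteq> cyc C k"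
proof (cases "k = m")
  case True
  then show ?thesis using rcc_group[OF assms] cyc_subgroup[OF assms]
    by (simp add: bdry_def group.triv_subgroup subgroup.one_closed)
next
  case False
  have "group_hom (grp C (k+1)) (grp C k) (bd C (k+1))"
    using rcc_group[OF assms(1)] rcc_bd_hom[OF assms(1), of "k+1"] assms False
    by (simp add: group_hom_def group_hom_axioms_def)
  then have s: "subgroup (bdry m C k) (grp C k)"
    using False group_hom.img_is_subgroup unfolding bdry_def by fastforce
  have "bdry m C k \<subseteq> cyc C k"
  proof
    fix x assume "x \<in> bdry m C k"
    then obtain c where c: "c \<in> carrier (grp C (k+1))" "x = bd C (k+1) c"
      using False unfolding bdry_def by auto
    have xc: "x \<in> carrier (grp C k)" using s \<open>x \<in> bdry m C k\<close> subgroup.subset by blast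
    show "x \<in> cyc C k"
    proof (cases "k = 1")
      case True then show ?thesis using xc by (simp add: cyc_def)
    next
      case k1: False
      have "bd C k x = \<one>\<^bsub>grp C (k-1)\<^esub>"
        using rcc_bdbd[OF assms(1), of "k+1" c] c k1 assms False by auto
      then show ?thesis using xc k1 by (simp add: cyc_def)
    qed
  qed
  then show ?thesis using s by simp
qed

lemma rcc_central:
  assumes "rcc m C" "2 \<le> k" "k \<le> m" "x \<in> carrier (grp C k)" "y \<in> cyc C k"
  shows "x \<otimes>\<^bsub>grp C k\<^esub> y = y \<otimes>\<^bsub>grp C k\<^esub> x"
proof -
  have yc: "y \<in> carrier (grp C k)" using cyc_carrier[OF assms(1) _ assms(3) assms(5)] assms(2) by simp
  interpret G: group "grp C k" using rcc_group[OF assms(1) _ assms(3)] assms(2) by simp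
  show ?thesis
  proof (cases "k = 2")
    case False
    then have "comm_group (grp C k)" using assms unfolding rcc_def by auto
    then show ?thesis using comm_monoid.m_comm[OF comm_group.axioms(1)] assms yc by metis
  next
    case True
    have by1: "bd C 2 y = \<one>\<^bsub>grp C 1\<^esub>" using assms True by (simp add: cyc_def)
    have "act C 2 x (bd C 2 y) = inv\<^bsub>grp C 2\<^esub> y \<otimes>\<^bsub>grp C 2\<^esub> x \<otimes>\<^bsub>grp C 2\<^esub> y"
      using assms True yc unfolding rcc_def by auto
    moreover have "act C 2 x (bd C 2 y) = x" using by1 assms True unfolding rcc_def by auto
    ultimately have e: "x = inv\<^bsub>grp C k\<^esub> y \<otimes>\<^bsub>grp C k\<^esub> x \<otimes>\<^bsub>grp C k\<^esub> y" using True by simp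
    have "y \<otimes>\<^bsub>grp C k\<^esub> x = y \<otimes>\<^bsub>grp C k\<^esub> (inv\<^bsub>grp C k\<^esub> y \<otimes>\<^bsub>grp C k\<^esub> x \<otimes>\<^bsub>grp C k\<^esub> y)"
      using e by simp
    also have "\<dots> = x \<otimes>\<^bsub>grp C k\<^esub> y" using yc assms(4) by (simp add: G.m_assoc[symmetric])
    finally show ?thesis by simp
  qed
qed

lemma subgroup_restrict:
  assumes "group G" "subgroup B G" "subgroup Z G" "B \<subseteq> Z"
  shows "subgroup B (G\<lparr>carrier := Z\<rparr>)"
proof -
  have "\<And>x. x \<in> B \<Longrightarrow> inv\<^bsub>G\<lparr>carrier := Z\<rparr>\<^esub> x = inv\<^bsub>G\<^esub> x"
    using group.m_inv_consistent[OF assms(1) assms(3)] assms(4) by blast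
  then show ?thesis using assms unfolding subgroup_def by auto
qed

lemma r_coset_upd: "H #>\<^bsub>G\<lparr>carrier := Z\<rparr>\<^esub> a = H #>\<^bsub>G\<^esub> a"
  by (simp add: r_coset_def)

lemma set_mult_upd: "H <#>\<^bsub>G\<lparr>carrier := Z\<rparr>\<^esub> K = H <#>\<^bsub>G\<^esub> K"
  by (simp add: set_mult_def)

lemma bdry_normal:
  assumes "rcc m C" "1 \<le> k" "k \<le> m"
  shows "normal (bdry m C k) ((grp C k)\<lparr>carrier := cyc C k\<rparr>)"
proof -
  let ?G = "grp C k" let ?K = "(grp C k)\<lparr>carrier := cyc C k\<rparr>"
  let ?B = "bdry m C k"
  have gG: "group ?G" using rcc_group assms by auto
  have sZ: "subgroup (cyc C k) ?G" using cyc_subgroup assms by auto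
  have gK: "group ?K" using subgroup.subgroup_is_group[OF sZ gG] .
  have sB: "subgroup ?B ?G" and BZ: "?B \<subseteq> cyc C k" using bdry_subgroup[OF assms] by auto
  have sBK: "subgroup ?B ?K" using subgroup_restrict[OF gG sB sZ BZ] .
  have conj: "x \<otimes>\<^bsub>?G\<^esub> h \<otimes>\<^bsub>?G\<^esub> inv\<^bsub>?G\<^esub> x \<in> ?B" if x: "x \<in> cyc C k" and h: "h \<in> ?B" for x h
  proof -
    have xc: "x \<in> carrier ?G" using x sZ subgroup.subset by blast
    have hc: "h \<in> carrier ?G" using h sB subgroup.subset by blast
    show ?thesis
    proof (cases "k = 1")
      case k1: True
      show ?thesis
      proof (cases "k = m")
        case True
        then have "h = \<one>\<^bsub>?G\<^esub>" using h by (simp add: bdry_def)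
        then show ?thesis using xc gG True by (simp add: bdry_def monoid.r_one group.is_monoid group.r_inv)
      next
        case False
        have "h \<in> bd C 2 ` carrier (grp C 2)" using h k1 False by (simp add: bdry_def numeral_2_eq_2)
        then obtain c where c: "c \<in> carrier (grp C 2)" "h = bd C 2 c" by auto
        have ix: "inv\<^bsub>grp C 1\<^esub> x \<in> carrier (grp C 1)" using xc k1 gG group.inv_closed by fastforce
        have m2: "2 \<le> m" using False k1 assms by auto
        have "act C 2 c (inv\<^bsub>grp C 1\<^esub> x) \<in> carrier (grp C 2)"
          using hom_in_carrier[OF rcc_act_hom[OF assms(1) _ m2 ix] c(1)] by simp
        moreover have "bd C 2 (act C 2 c (inv\<^bsub>grp C 1\<^esub> x)) =
            inv\<^bsub>grp C 1\<^esub> (inv\<^bsub>grp C 1\<^esub> x) \<otimes>\<^bsub>grp C 1\<^esub> bd C 2 c \<otimes>\<^bsub>grp C 1\<^esub> inv\<^bsub>grp C 1\<^esub> x"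
          using rcc_cm1[OF assms(1) m2 c(1) ix] .
        ultimately show ?thesis using c k1 False gG xc group.inv_inv[of ?G x]
          by (simp add: bdry_def numeral_2_eq_2[symmetric]) (metis image_eqI)
      qed
    next
      case False
      then have "x \<otimes>\<^bsub>?G\<^esub> h = h \<otimes>\<^bsub>?G\<^esub> x" using rcc_central[OF assms(1), of k h x] assms x hc BZ h
        by auto
      then show ?thesis using xc hc gG h
        by (simp add: monoid.m_assoc group.is_monoid group.r_inv monoid.r_one group.inv_closed)
    qed
  qed
  show ?thesis
    using group.normal_inv_iff[OF gK] sBK conj group.m_inv_consistent[OF gG sZ] by simp
qed




lemma htpy_group: "rcc m C \<Longrightarrow> 1 \<le> k \<Longrightarrow> k \<le> m \<Longrightarrow> group (htpy m C k)"
  unfolding htpy_def using bdry_normal normal.factorgroup_is_group by blast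

lemma htpy_carrier: "carrier (htpy m C k) = (\<lambda>y. bdry m C k #>\<^bsub>grp C k\<^esub> y) ` cyc C k"
  by (auto simp: htpy_def FactGroup_def RCOSETS_def r_coset_upd)

lemma htpy_mult: "S \<otimes>\<^bsub>htpy m C k\<^esub> T = S <#>\<^bsub>grp C k\<^esub> T"
  by (simp add: htpy_def FactGroup_def set_mult_upd)

lemma htpy_rcos_sum:
  assumes "rcc m C" "1 \<le> k" "k \<le> m" "y \<in> cyc C k" "z \<in> cyc C k"
  shows "(bdry m C k #>\<^bsub>grp C k\<^esub> y) <#>\<^bsub>grp C k\<^esub> (bdry m C k #>\<^bsub>grp C k\<^esub> z)
         = bdry m C k #>\<^bsub>grp C k\<^esub> (y \<otimes>\<^bsub>grp C k\<^esub> z)"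
  using normal.rcos_sum[OF bdry_normal[OF assms(1-3)], of y z] assms(4,5)
  by (simp add: r_coset_upd set_mult_upd)

lemma rcos_eq_iff:
  assumes "group G" "subgroup B G" "x \<in> carrier G" "y \<in> carrier G"
  shows "(B #>\<^bsub>G\<^esub> x = B #>\<^bsub>G\<^esub> y) = (x \<otimes>\<^bsub>G\<^esub> inv\<^bsub>G\<^esub> y \<in> B)"
proof
  assume "B #>\<^bsub>G\<^esub> x = B #>\<^bsub>G\<^esub> y"
  moreover have "x \<in> B #>\<^bsub>G\<^esub> x" using group.rcos_self[OF assms(1,3,2)] .
  ultimately show "x \<otimes>\<^bsub>G\<^esub> inv\<^bsub>G\<^esub> y \<in> B"
    using subgroup.rcos_module_imp[OF assms(2,1,4)] by simp
next
  assume "x \<otimes>\<^bsub>G\<^esub> inv\<^bsub>G\<^esub> y \<in> B"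
  then have "x \<in> B #>\<^bsub>G\<^esub> y" using subgroup.rcos_module_rev[OF assms(2,1,4,3)] by simp
  then show "B #>\<^bsub>G\<^esub> x = B #>\<^bsub>G\<^esub> y"
    using group.repr_independence[OF assms(1) _ assms(4,2)] by simp
qed

lemma ccmor_hom: "ccmor m C D g \<Longrightarrow> 1 \<le> k \<Longrightarrow> k \<le> m \<Longrightarrow> g k \<in> hom (grp C k) (grp D k)"
  unfolding ccmor_def by auto

lemma ccmor_bd: "ccmor m C D g \<Longrightarrow> 2 \<le> k \<Longrightarrow> k \<le> m \<Longrightarrow> x \<in> carrier (grp C k) \<Longrightarrow>
   g (k-1) (bd C k x) = bd D k (g k x)"
  unfolding ccmor_def by auto

lemma ccmor_act: "ccmor m C D g \<Longrightarrow> 2 \<le> k \<Longrightarrow> k \<le> m \<Longrightarrow> x \<in> carrier (grp C k) \<Longrightarrow>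
   a \<in> carrier (grp C 1) \<Longrightarrow> g k (act C k x a) = act D k (g k x) (g 1 a)"
  unfolding ccmor_def by auto

context
  fixes m C D g k
  assumes C: "rcc m C" and D: "rcc m D" and g: "ccmor m C D g"
    and k1: "1 \<le> k" and km: "k \<le> m"
begin

lemma gC: "group (grp C k)" using rcc_group[OF C k1 km] .
lemma gD: "group (grp D k)" using rcc_group[OF D k1 km] .
lemma gk: "g k \<in> hom (grp C k) (grp D k)" using ccmor_hom[OF g k1 km] .
lemma gh: "group_hom (grp C k) (grp D k) (g k)"
  using gC gD gk by (simp add: group_hom_def group_hom_axioms_def)

lemma ccmor_cyc: "y \<in> cyc C k \<Longrightarrow> g k y \<in> cyc D k"
proof (cases "k = 1")
  case True
  assume "y \<in> cyc C k"
  then show ?thesis using True hom_in_carrier[OF gk] by (simp add: cyc_def)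
next
  case False
  assume y: "y \<in> cyc C k"
  then have yc: "y \<in> carrier (grp C k)" and b: "bd C k y = \<one>\<^bsub>grp C (k-1)\<^esub>"
    using False by (auto simp: cyc_def)
  have k2: "2 \<le> k" using False k1 by auto
  have "g (k-1) (bd C k y) = bd D k (g k y)" using ccmor_bd[OF g k2 km yc] .
  moreover have "g (k-1) \<one>\<^bsub>grp C (k-1)\<^esub> = \<one>\<^bsub>grp D (k-1)\<^esub>"
    using hom_one[OF ccmor_hom[OF g, of "k-1"] rcc_group[OF C] rcc_group[OF D]] k2 km by auto
  ultimately show ?thesis using b hom_in_carrier[OF gk yc] False by (simp add: cyc_def)
qed

lemma ccmor_bdry: "x \<in> bdry m C k \<Longrightarrow> g k x \<in> bdry m D k"
proof (cases "k = m")
  case True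
  assume "x \<in> bdry m C k"
  then show ?thesis using True group_hom.hom_one[OF gh] by (simp add: bdry_def)
next
  case False
  assume "x \<in> bdry m C k"
  then obtain c where c: "c \<in> carrier (grp C (k+1))" "x = bd C (k+1) c"
    using False by (auto simp: bdry_def)
  have "g k x = bd D (k+1) (g (k+1) c)" using ccmor_bd[OF g, of "k+1" c] c False km k1 by simp
  moreover have "g (k+1) c \<in> carrier (grp D (k+1))"
    using hom_in_carrier[OF ccmor_hom[OF g, of "k+1"] c(1)] False km by simp
  ultimately show ?thesis using False by (simp add: bdry_def)
qed

lemma htpy_map_coset:
  assumes y: "y \<in> cyc C k"
  shows "htpy_map m D g k (bdry m C k #>\<^bsub>grp C k\<^esub> y) = bdry m D k #>\<^bsub>grp D k\<^esub> g k y"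
proof -
  have sBC: "subgroup (bdry m C k) (grp C k)" using bdry_subgroup[OF C k1 km] by auto
  have sBD: "subgroup (bdry m D k) (grp D k)" using bdry_subgroup[OF D k1 km] by auto
  have yc: "y \<in> carrier (grp C k)" using cyc_carrier[OF C k1 km y] .
  have eq: "bdry m D k #>\<^bsub>grp D k\<^esub> g k x = bdry m D k #>\<^bsub>grp D k\<^esub> g k y"
    if x: "x \<in> bdry m C k #>\<^bsub>grp C k\<^esub> y" for x
  proof -
    obtain b where b: "b \<in> bdry m C k" "x = b \<otimes>\<^bsub>grp C k\<^esub> y" using x unfolding r_coset_def by auto
    have bc: "b \<in> carrier (grp C k)" using b sBC subgroup.subset by blast
    have gb: "g k b \<in> bdry m D k" using ccmor_bdry b(1) .
    have gbc: "g k b \<in> carrier (grp D k)" using hom_in_carrier[OF gk bc] .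
    have gyc: "g k y \<in> carrier (grp D k)" using hom_in_carrier[OF gk yc] .
    have "g k x = g k b \<otimes>\<^bsub>grp D k\<^esub> g k y" using b(2) hom_mult[OF gk bc yc] by simp
    then have "bdry m D k #>\<^bsub>grp D k\<^esub> g k x = (bdry m D k #>\<^bsub>grp D k\<^esub> g k b) #>\<^bsub>grp D k\<^esub> g k y"
      using group.coset_mult_assoc[OF gD subgroup.subset[OF sBD] gbc gyc] by simp
    also have "\<dots> = bdry m D k #>\<^bsub>grp D k\<^esub> g k y"
      using group.coset_join2[OF gD gbc sBD gb] by simp
    finally show ?thesis .
  qed
  have "y \<in> bdry m C k #>\<^bsub>grp C k\<^esub> y" using group.rcos_self[OF gC yc sBC] .
  then show ?thesis unfolding htpy_map_def using eq by blast
qed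

lemma htpy_map_hom: "htpy_map m D g k \<in> hom (htpy m C k) (htpy m D k)"
proof (rule homI)
  fix S assume "S \<in> carrier (htpy m C k)"
  then obtain y where y: "y \<in> cyc C k" "S = bdry m C k #>\<^bsub>grp C k\<^esub> y" by (auto simp: htpy_carrier)
  have "htpy_map m D g k S = bdry m D k #>\<^bsub>grp D k\<^esub> g k y" unfolding y(2) by (rule htpy_map_coset[OF y(1)])
  moreover have "g k y \<in> cyc D k" using ccmor_cyc y(1) .
  ultimately show "htpy_map m D g k S \<in> carrier (htpy m D k)"
    unfolding htpy_carrier by blast
next
  fix S T assume "S \<in> carrier (htpy m C k)" "T \<in> carrier (htpy m C k)"
  then obtain y z where y: "y \<in> cyc C k" "S = bdry m C k #>\<^bsub>grp C k\<^esub> y"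
    and z: "z \<in> cyc C k" "T = bdry m C k #>\<^bsub>grp C k\<^esub> z" by (auto simp: htpy_carrier)
  have yc: "y \<in> carrier (grp C k)" using cyc_carrier[OF C k1 km y(1)] .
  have zc: "z \<in> carrier (grp C k)" using cyc_carrier[OF C k1 km z(1)] .
  have yz: "y \<otimes>\<^bsub>grp C k\<^esub> z \<in> cyc C k" using subgroup.m_closed[OF cyc_subgroup[OF C k1 km] y(1) z(1)] .
  have "htpy_map m D g k (S \<otimes>\<^bsub>htpy m C k\<^esub> T) = htpy_map m D g k (bdry m C k #>\<^bsub>grp C k\<^esub> (y \<otimes>\<^bsub>grp C k\<^esub> z))"
    using y(2) z(2) htpy_rcos_sum[OF C k1 km y(1) z(1)] by (simp add: htpy_mult)
  also have "\<dots> = bdry m D k #>\<^bsub>grp D k\<^esub> g k (y \<otimes>\<^bsub>grp C k\<^esub> z)"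
    using htpy_map_coset[OF yz] .
  also have "\<dots> = bdry m D k #>\<^bsub>grp D k\<^esub> (g k y \<otimes>\<^bsub>grp D k\<^esub> g k z)"
    using hom_mult[OF gk yc zc] by simp
  also have "\<dots> = (bdry m D k #>\<^bsub>grp D k\<^esub> g k y) <#>\<^bsub>grp D k\<^esub> (bdry m D k #>\<^bsub>grp D k\<^esub> g k z)"
    using htpy_rcos_sum[OF D k1 km ccmor_cyc[OF y(1)] ccmor_cyc[OF z(1)]] by simp
  also have "\<dots> = htpy_map m D g k S \<otimes>\<^bsub>htpy m D k\<^esub> htpy_map m D g k T"
    using htpy_map_coset[OF y(1)] htpy_map_coset[OF z(1)] y(2) z(2) by (simp add: htpy_mult)
  finally show "htpy_map m D g k (S \<otimes>\<^bsub>htpy m C k\<^esub> T) =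
        htpy_map m D g k S \<otimes>\<^bsub>htpy m D k\<^esub> htpy_map m D g k T" .
qed

lemma htpy_map_iso:
  assumes S: "\<forall>w\<in>cyc D k. \<exists>x\<in>cyc C k. g k x = w"
    and I: "\<forall>z\<in>cyc C k. g k z \<in> bdry m D k \<longrightarrow> z \<in> bdry m C k"
  shows "htpy_map m D g k \<in> iso (htpy m C k) (htpy m D k)"
proof -
  have sBC: "subgroup (bdry m C k) (grp C k)" using bdry_subgroup[OF C k1 km] by auto
  have sBD: "subgroup (bdry m D k) (grp D k)" using bdry_subgroup[OF D k1 km] by auto
  have inj: "inj_on (htpy_map m D g k) (carrier (htpy m C k))"
  proof (rule inj_onI)
    fix S T assume "S \<in> carrier (htpy m C k)" "T \<in> carrier (htpy m C k)"
      and e: "htpy_map m D g k S = htpy_map m D g k T"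
    then obtain y z where y: "y \<in> cyc C k" "S = bdry m C k #>\<^bsub>grp C k\<^esub> y"
      and z: "z \<in> cyc C k" "T = bdry m C k #>\<^bsub>grp C k\<^esub> z" by (auto simp: htpy_carrier)
    have yc: "y \<in> carrier (grp C k)" using cyc_carrier[OF C k1 km y(1)] .
    have zc: "z \<in> carrier (grp C k)" using cyc_carrier[OF C k1 km z(1)] .
    have izc: "inv\<^bsub>grp C k\<^esub> z \<in> carrier (grp C k)" using group.inv_closed[OF gC zc] .
    have "bdry m D k #>\<^bsub>grp D k\<^esub> g k y = bdry m D k #>\<^bsub>grp D k\<^esub> g k z"
      using e y z htpy_map_coset by simp
    then have "g k y \<otimes>\<^bsub>grp D k\<^esub> inv\<^bsub>grp D k\<^esub> g k z \<in> bdry m D k"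
      using rcos_eq_iff[OF gD sBD hom_in_carrier[OF gk yc] hom_in_carrier[OF gk zc]] by simp
    then have "g k (y \<otimes>\<^bsub>grp C k\<^esub> inv\<^bsub>grp C k\<^esub> z) \<in> bdry m D k"
      using hom_mult[OF gk yc izc] group_hom.hom_inv[OF gh zc] by simp
    moreover have "y \<otimes>\<^bsub>grp C k\<^esub> inv\<^bsub>grp C k\<^esub> z \<in> cyc C k"
      using subgroup.m_closed[OF cyc_subgroup[OF C k1 km] y(1) subgroup.m_inv_closed[OF cyc_subgroup[OF C k1 km] z(1)]] .
    ultimately have "y \<otimes>\<^bsub>grp C k\<^esub> inv\<^bsub>grp C k\<^esub> z \<in> bdry m C k" using I by blast
    then show "S = T" using rcos_eq_iff[OF gC sBC yc zc] y z by simp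
  qed
  have surj: "htpy_map m D g k ` carrier (htpy m C k) = carrier (htpy m D k)"
  proof
    show "htpy_map m D g k ` carrier (htpy m C k) \<subseteq> carrier (htpy m D k)"
      using hom_carrier[OF htpy_map_hom] .
  next
    show "carrier (htpy m D k) \<subseteq> htpy_map m D g k ` carrier (htpy m C k)"
    proof
      fix T assume "T \<in> carrier (htpy m D k)"
      then obtain w where w: "w \<in> cyc D k" "T = bdry m D k #>\<^bsub>grp D k\<^esub> w" by (auto simp: htpy_carrier)
      obtain x where x: "x \<in> cyc C k" "g k x = w" using S w(1) by blast
      have "T = htpy_map m D g k (bdry m C k #>\<^bsub>grp C k\<^esub> x)" using htpy_map_coset[OF x(1)] x w by simp
      moreover have "bdry m C k #>\<^bsub>grp C k\<^esub> x \<in> carrier (htpy m C k)" using x by (simp add: htpy_carrier)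
      ultimately show "T \<in> htpy_map m D g k ` carrier (htpy m C k)" by blast
    qed
  qed
  show ?thesis using htpy_map_hom inj surj by (simp add: iso_def bij_betw_def)
qed

end

lemma htpy_map_comp:
  assumes Q: "rcc m Q" and E: "rcc m E" and H: "rcc m H"
    and h: "ccmor m Q E h" and p: "ccmor m E H p" and q: "ccmor m Q H q"
    and k1: "1 \<le> k" and km: "k \<le> m"
    and c: "\<forall>x\<in>carrier (grp Q k). p k (h k x) = q k x"
    and S: "S \<in> carrier (htpy m Q k)"
  shows "htpy_map m H q k S = htpy_map m H p k (htpy_map m E h k S)"
proof -
  obtain y where y: "y \<in> cyc Q k" "S = bdry m Q k #>\<^bsub>grp Q k\<^esub> y" using S by (auto simp: htpy_carrier)
  have yc: "y \<in> carrier (grp Q k)" using cyc_carrier[OF Q k1 km y(1)] .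
  show ?thesis
    using y htpy_map_coset[OF Q E h k1 km y(1)] htpy_map_coset[OF Q H q k1 km y(1)]
      htpy_map_coset[OF E H p k1 km ccmor_cyc[OF Q E h k1 km y(1)]] c yc by simp
qed

lemma two_of_three:
  assumes F: "F \<in> hom A B" and Qm: "Qm \<in> iso A C" and P: "P \<in> iso B C"
    and c: "\<forall>S\<in>carrier A. Qm S = P (F S)"
  shows "F \<in> iso A B"
proof -
  have FA: "F ` carrier A \<subseteq> carrier B" using hom_carrier[OF F] .
  have bQ: "bij_betw Qm (carrier A) (carrier C)" and bP: "bij_betw P (carrier B) (carrier C)"
    using Qm P by (auto simp: iso_def)
  have inj: "inj_on F (carrier A)"
  proof (rule inj_onI)
    fix S T assume "S \<in> carrier A" "T \<in> carrier A" "F S = F T"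
    then have "Qm S = Qm T" using c by simp
    then show "S = T" using bQ \<open>S \<in> carrier A\<close> \<open>T \<in> carrier A\<close> by (auto simp: bij_betw_def inj_on_def)
  qed
  have "carrier B \<subseteq> F ` carrier A"
  proof
    fix T assume T: "T \<in> carrier B"
    then have "P T \<in> carrier C" using bP by (auto simp: bij_betw_def)
    then have "P T \<in> Qm ` carrier A" using bQ by (simp add: bij_betw_def)
    then obtain S where S: "S \<in> carrier A" "Qm S = P T" by (metis imageE)
    then have "P (F S) = P T" using c by simp
    moreover have "F S \<in> carrier B" using FA S by auto
    ultimately have "F S = T" using bP T by (auto simp: bij_betw_def inj_on_def)
    then show "T \<in> F ` carrier A" using S by blast
  qed
  then show ?thesis using F inj FA by (auto simp: iso_def bij_betw_def)
qed




definition inlG :: "'a monoid \<Rightarrow> ('a + 'b) monoid" where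
 "inlG A = \<lparr>carrier = Inl ` carrier A, monoid.mult = (\<lambda>a b. Inl (projl a \<otimes>\<^bsub>A\<^esub> projl b)), monoid.one = Inl \<one>\<^bsub>A\<^esub>\<rparr>"

definition inrP :: "'b monoid \<Rightarrow> 'c monoid \<Rightarrow> ('a + 'b \<times> 'c) monoid" where
 "inrP A B = \<lparr>carrier = Inr ` (carrier A \<times> carrier B),
    monoid.mult = (\<lambda>a b. Inr (fst (projr a) \<otimes>\<^bsub>A\<^esub> fst (projr b), snd (projr a) \<otimes>\<^bsub>B\<^esub> snd (projr b))),
    monoid.one = Inr (\<one>\<^bsub>A\<^esub>, \<one>\<^bsub>B\<^esub>)\<rparr>"

lemma inlG_carrier [simp]: "carrier (inlG A) = Inl ` carrier A" by (simp add: inlG_def)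
lemma inlG_mult [simp]: "x \<otimes>\<^bsub>inlG A\<^esub> y = Inl (projl x \<otimes>\<^bsub>A\<^esub> projl y)" by (simp add: inlG_def)
lemma inlG_one [simp]: "\<one>\<^bsub>inlG A\<^esub> = Inl \<one>\<^bsub>A\<^esub>" by (simp add: inlG_def)
lemma inrP_carrier [simp]: "carrier (inrP A B) = Inr ` (carrier A \<times> carrier B)" by (simp add: inrP_def)
lemma inrP_mult [simp]: "x \<otimes>\<^bsub>inrP A B\<^esub> y = Inr (fst (projr x) \<otimes>\<^bsub>A\<^esub> fst (projr y), snd (projr x) \<otimes>\<^bsub>B\<^esub> snd (projr y))"
  by (simp add: inrP_def)
lemma inrP_one [simp]: "\<one>\<^bsub>inrP A B\<^esub> = Inr (\<one>\<^bsub>A\<^esub>, \<one>\<^bsub>B\<^esub>)" by (simp add: inrP_def)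

lemma inlG_group: assumes "group A" shows "group (inlG A :: ('a + 'b) monoid)"
proof -
  interpret A: group A by fact
  show ?thesis
  proof (rule groupI)
    fix x assume "x \<in> carrier (inlG A :: ('a + 'b) monoid)"
    then obtain a where a: "a \<in> carrier A" "x = Inl a" by auto
    then have "Inl (inv\<^bsub>A\<^esub> a) \<otimes>\<^bsub>inlG A\<^esub> x = \<one>\<^bsub>inlG A :: ('a + 'b) monoid\<^esub>" by simp
    moreover have "Inl (inv\<^bsub>A\<^esub> a) \<in> carrier (inlG A :: ('a + 'b) monoid)" using a by simp
    ultimately show "\<exists>y\<in>carrier (inlG A :: ('a + 'b) monoid). y \<otimes>\<^bsub>inlG A\<^esub> x = \<one>\<^bsub>inlG A :: ('a + 'b) monoid\<^esub>" by blast
  qed (auto simp: A.m_assoc)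
qed

lemma inlG_comm: assumes "comm_group A" shows "comm_group (inlG A :: ('a + 'b) monoid)"
proof -
  interpret A: comm_group A by fact
  have "group (inlG A :: ('a + 'b) monoid)" using inlG_group A.is_group by blast
  then show ?thesis by (rule group.group_comm_groupI) (auto simp: A.m_comm)
qed

lemma inlG_inv: assumes "group A" "a \<in> carrier A"
  shows "inv\<^bsub>(inlG A :: ('a + 'b) monoid)\<^esub> (Inl a) = Inl (inv\<^bsub>A\<^esub> a)"
proof -
  interpret A: group A by fact
  show ?thesis using group.inv_equality[OF inlG_group[OF assms(1)], of "Inl (inv\<^bsub>A\<^esub> a)" "Inl a"] assms(2)
    by simp
qed

lemma inrP_group: assumes "group A" "group B" shows "group (inrP A B :: ('a + 'b \<times> 'c) monoid)"
proof -
  interpret A: group A by fact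
  interpret B: group B by fact
  show ?thesis
  proof (rule groupI)
    fix x assume "x \<in> carrier (inrP A B :: ('a + 'b \<times> 'c) monoid)"
    then obtain a b where a: "a \<in> carrier A" "b \<in> carrier B" "x = Inr (a, b)" by auto
    then have "Inr (inv\<^bsub>A\<^esub> a, inv\<^bsub>B\<^esub> b) \<otimes>\<^bsub>inrP A B\<^esub> x = \<one>\<^bsub>inrP A B :: ('a + 'b \<times> 'c) monoid\<^esub>" by simp
    moreover have "Inr (inv\<^bsub>A\<^esub> a, inv\<^bsub>B\<^esub> b) \<in> carrier (inrP A B :: ('a + 'b \<times> 'c) monoid)" using a by simp
    ultimately show "\<exists>y\<in>carrier (inrP A B :: ('a + 'b \<times> 'c) monoid). y \<otimes>\<^bsub>inrP A B\<^esub> x = \<one>\<^bsub>inrP A B :: ('a + 'b \<times> 'c) monoid\<^esub>" by blast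
  qed (auto simp: A.m_assoc B.m_assoc)
qed

lemma inrP_comm: assumes "comm_group A" "comm_group B" shows "comm_group (inrP A B :: ('a + 'b \<times> 'c) monoid)"
proof -
  interpret A: comm_group A by fact
  interpret B: comm_group B by fact
  have "group (inrP A B :: ('a + 'b \<times> 'c) monoid)" using inrP_group A.is_group B.is_group by blast
  then show ?thesis by (rule group.group_comm_groupI) (auto simp: A.m_comm B.m_comm)
qed

lemma inlG_hom: "h \<in> hom A B \<Longrightarrow> (\<lambda>z. Inl (h (projl z))) \<in> hom (inlG A :: ('a + 'c) monoid) (inlG B :: ('b + 'd) monoid)"
  by (rule homI) (auto simp: hom_in_carrier hom_mult)

lemma inrP_hom: "h \<in> hom A A' \<Longrightarrow> g \<in> hom B B' \<Longrightarrow>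
  (\<lambda>z. Inr (h (fst (projr z)), g (snd (projr z)))) \<in> hom (inrP A B :: ('x + 'a \<times> 'b) monoid) (inrP A' B' :: ('y + 'c \<times> 'd) monoid)"
  by (rule homI) (auto simp: hom_in_carrier hom_mult)

lemma inlG_hom_out: "h \<in> hom A B \<Longrightarrow> (\<lambda>z. h (projl z)) \<in> hom (inlG A :: ('a + 'c) monoid) B"
  by (rule homI) (auto simp: hom_in_carrier hom_mult)

lemma inrP_fst_hom: "(\<lambda>z. fst (projr z)) \<in> hom (inrP A B :: ('x + 'a \<times> 'b) monoid) A"
  by (rule homI) auto




declare One_nat_def [simp del]

context
  fixes n :: nat and H :: "'h xcx" and G :: "'g xcx" and E :: "'e xcx"
    and p :: "nat \<Rightarrow> 'e \<Rightarrow> 'h" and f :: "nat \<Rightarrow> 'e \<Rightarrow> 'g"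
    and \<alpha> :: "'h \<Rightarrow> 'e" and \<beta> :: "'g \<Rightarrow> 'e"
  assumes n3: "3 \<le> n" and rH: "rcc n H" and rG: "rcc n G" and bf: "butterfly n H G E p f \<alpha> \<beta>"
begin

abbreviation "ES \<equiv> Estar n H G E p f \<alpha> \<beta>"

lemma bE: "rcc (n-1) E" using bf unfolding butterfly_def by auto
lemma pE: "ccmor (n-1) E H p" using bf unfolding butterfly_def by auto
lemma fE: "ccmor (n-1) E G f" using bf unfolding butterfly_def by auto
lemma \<alpha>h: "\<alpha> \<in> hom (grp H n) (grp E (n-1))" using bf unfolding butterfly_def by auto
lemma \<beta>h: "\<beta> \<in> hom (grp G n) (grp E (n-1))" using bf unfolding butterfly_def by auto
lemma p\<alpha>: "x \<in> carrier (grp H n) \<Longrightarrow> p (n-1) (\<alpha> x) = bd H n x" using bf unfolding butterfly_def by auto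
lemma uS: "1 \<le> k \<Longrightarrow> k \<le> n-1 \<Longrightarrow> u_surj E H p k"
  using bf unfolding butterfly_def by (cases "k = n-1") auto
lemma \<beta>inj: "inj_on \<beta> (carrier (grp G n))" using bf unfolding butterfly_def by auto
lemma \<beta>img: "\<beta> ` carrier (grp G n) = {x\<in>carrier (grp E (n-1)).
       bd E (n-1) x = \<one>\<^bsub>grp E (n-2)\<^esub> \<and> p (n-1) x = \<one>\<^bsub>grp H (n-1)\<^esub>}"
  using bf unfolding butterfly_def by auto
lemma B3a: "x \<in> carrier (grp H n) \<Longrightarrow> y \<in> carrier (grp G n) \<Longrightarrow>
      bd E (n-1) (\<alpha> x \<otimes>\<^bsub>grp E (n-1)\<^esub> \<beta> y) = \<one>\<^bsub>grp E (n-2)\<^esub>"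
  using bf unfolding butterfly_def by auto
lemma B4a: "a \<in> carrier (grp E 1) \<Longrightarrow> x \<in> carrier (grp H n) \<Longrightarrow> \<alpha> (act H n x (p 1 a)) = act E (n-1) (\<alpha> x) a"
  using bf unfolding butterfly_def by auto
lemma B4b: "a \<in> carrier (grp E 1) \<Longrightarrow> y \<in> carrier (grp G n) \<Longrightarrow> \<beta> (act G n y (f 1 a)) = act E (n-1) (\<beta> y) a"
  using bf unfolding butterfly_def by auto

lemma ES_grp_ne: "k \<noteq> n \<Longrightarrow> grp ES k = inlG (grp E k)"
  by (simp add: Estar_def inlG_def)
lemma ES_grp_n: "grp ES n = inrP (grp H n) (grp G n)"
  by (simp add: Estar_def inrP_def)
lemma ES_bd_ne: "k \<noteq> n \<Longrightarrow> bd ES k z = Inl (bd E k (projl z))"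
  by (simp add: Estar_def)
lemma ES_bd_n: "bd ES n z = Inl (\<alpha> (fst (projr z)) \<otimes>\<^bsub>grp E (n-1)\<^esub> \<beta> (snd (projr z)))"
  by (simp add: Estar_def)
lemma ES_act_ne: "k \<noteq> n \<Longrightarrow> act ES k z a = Inl (act E k (projl z) (projl a))"
  by (simp add: Estar_def)
lemma ES_act_n: "act ES n z a = Inr (act H n (fst (projr z)) (p 1 (projl a)), act G n (snd (projr z)) (f 1 (projl a)))"
  by (simp add: Estar_def)

lemma n1: "1 \<noteq> n" "2 \<noteq> n" "n - 1 \<noteq> n" "n - 2 \<noteq> n" using n3 by auto

lemma gE: "1 \<le> k \<Longrightarrow> k \<le> n-1 \<Longrightarrow> group (grp E k)" using rcc_group[OF bE] .
lemma gH: "1 \<le> k \<Longrightarrow> k \<le> n \<Longrightarrow> group (grp H k)" using rcc_group[OF rH] .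
lemma gG: "1 \<le> k \<Longrightarrow> k \<le> n \<Longrightarrow> group (grp G k)" using rcc_group[OF rG] .

lemma \<beta>cyc: "y \<in> carrier (grp G n) \<Longrightarrow> \<beta> y \<in> cyc E (n-1) \<and> p (n-1) (\<beta> y) = \<one>\<^bsub>grp H (n-1)\<^esub>"
proof -
  assume y: "y \<in> carrier (grp G n)"
  have "\<beta> y \<in> {x\<in>carrier (grp E (n-1)).
       bd E (n-1) x = \<one>\<^bsub>grp E (n-2)\<^esub> \<and> p (n-1) x = \<one>\<^bsub>grp H (n-1)\<^esub>}"
    using \<beta>img y by blast
  then show ?thesis using n3 by (auto simp add: cyc_def numeral_2_eq_2)
qed

lemma ES1: "grp ES 1 = inlG (grp E 1)" using ES_grp_ne n1 by simp

lemma p1_one: "p 1 \<one>\<^bsub>grp E 1\<^esub> = \<one>\<^bsub>grp H 1\<^esub>"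
  using hom_one[OF ccmor_hom[OF pE] gE gH] n3 by auto
lemma f1_one: "f 1 \<one>\<^bsub>grp E 1\<^esub> = \<one>\<^bsub>grp G 1\<^esub>"
  using hom_one[OF ccmor_hom[OF fE] gE gG] n3 by auto

lemma r1: "\<forall>k\<in>{1..n}. group (grp ES k)"
proof
  fix k assume k: "k \<in> {1..n}"
  show "group (grp ES k)"
  proof (cases "k = n")
    case True then show ?thesis using n3 by (simp add: ES_grp_n inrP_group gH gG)
  next
    case False then have "k \<le> n-1" using k by auto
    then show ?thesis using k False by (simp add: ES_grp_ne inlG_group gE)
  qed
qed

lemma r2: "\<forall>k\<in>{3..n}. comm_group (grp ES k)"
proof
  fix k assume k: "k \<in> {3..n}"
  show "comm_group (grp ES k)"
  proof (cases "k = n")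
    case True then show ?thesis using n3 by (simp add: ES_grp_n inrP_comm rcc_comm[OF rH] rcc_comm[OF rG])
  next
    case False then have "k \<le> n-1" using k by auto
    then show ?thesis using k False by (simp add: ES_grp_ne inlG_comm rcc_comm[OF bE])
  qed
qed

lemma r3: "\<forall>k\<in>{2..n}. bd ES k \<in> hom (grp ES k) (grp ES (k-1))"
proof
  fix k assume k: "k \<in> {2..n}"
  show "bd ES k \<in> hom (grp ES k) (grp ES (k-1))"
  proof (cases "k = n")
    case False
    have eq: "bd ES k = (\<lambda>z. Inl (bd E k (projl z)))" using ES_bd_ne[OF False] by (rule ext)
    have k1n: "k - 1 \<noteq> n" using k by auto
    have hb: "bd E k \<in> hom (grp E k) (grp E (k-1))" using rcc_bd_hom[OF bE] k False by auto
    show ?thesis unfolding eq ES_grp_ne[OF False] ES_grp_ne[OF k1n] by (rule inlG_hom[OF hb])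
  next
    case True
    interpret EG: group "grp E (n-1)" using gE n3 by simp
    have cen: "\<beta> y \<otimes>\<^bsub>grp E (n-1)\<^esub> \<alpha> x = \<alpha> x \<otimes>\<^bsub>grp E (n-1)\<^esub> \<beta> y"
      if "x \<in> carrier (grp H n)" "y \<in> carrier (grp G n)" for x y
    proof -
      have "\<beta> y \<in> cyc E (n-1)" using \<beta>cyc that(2) by blast
      then show ?thesis using rcc_central[OF bE, of "n-1" "\<alpha> x" "\<beta> y"] n3 hom_in_carrier[OF \<alpha>h that(1)]
        by auto
    qed
    show ?thesis unfolding True ES_grp_n
    proof (rule homI)
      fix z assume "z \<in> carrier (inrP (grp H n) (grp G n) :: ('e + 'h \<times> 'g) monoid)"
      then obtain a b where ab: "a \<in> carrier (grp H n)" "b \<in> carrier (grp G n)" "z = Inr (a, b)" by auto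
      have "\<alpha> a \<otimes>\<^bsub>grp E (n-1)\<^esub> \<beta> b \<in> carrier (grp E (n-1))"
        using EG.m_closed hom_in_carrier[OF \<alpha>h ab(1)] hom_in_carrier[OF \<beta>h ab(2)] by blast
      then show "bd ES n z \<in> carrier (grp ES (n-1))"
        using ES_grp_ne[OF n1(3)] ab by (simp add: ES_bd_n)
    next
      fix z w assume z: "z \<in> carrier (inrP (grp H n) (grp G n) :: ('e + 'h \<times> 'g) monoid)"
        and w: "w \<in> carrier (inrP (grp H n) (grp G n) :: ('e + 'h \<times> 'g) monoid)"
      then obtain x1 y1 x2 y2 where xy: "x1 \<in> carrier (grp H n)" "y1 \<in> carrier (grp G n)" "z = Inr (x1, y1)"
        "x2 \<in> carrier (grp H n)" "y2 \<in> carrier (grp G n)" "w = Inr (x2, y2)" by auto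
      have ca: "\<alpha> x1 \<in> carrier (grp E (n-1))" "\<alpha> x2 \<in> carrier (grp E (n-1))"
        using hom_in_carrier[OF \<alpha>h] xy by auto
      have cb: "\<beta> y1 \<in> carrier (grp E (n-1))" "\<beta> y2 \<in> carrier (grp E (n-1))"
        using hom_in_carrier[OF \<beta>h] xy by auto
      have "\<alpha> (x1 \<otimes>\<^bsub>grp H n\<^esub> x2) \<otimes>\<^bsub>grp E (n-1)\<^esub> \<beta> (y1 \<otimes>\<^bsub>grp G n\<^esub> y2)
          = \<alpha> x1 \<otimes>\<^bsub>grp E (n-1)\<^esub> (\<alpha> x2 \<otimes>\<^bsub>grp E (n-1)\<^esub> \<beta> y1) \<otimes>\<^bsub>grp E (n-1)\<^esub> \<beta> y2"
        using hom_mult[OF \<alpha>h xy(1,4)] hom_mult[OF \<beta>h xy(2,5)] ca cb by (simp add: EG.m_assoc)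
      also have "\<dots> = \<alpha> x1 \<otimes>\<^bsub>grp E (n-1)\<^esub> (\<beta> y1 \<otimes>\<^bsub>grp E (n-1)\<^esub> \<alpha> x2) \<otimes>\<^bsub>grp E (n-1)\<^esub> \<beta> y2"
        using cen[OF xy(4) xy(2)] by simp
      also have "\<dots> = (\<alpha> x1 \<otimes>\<^bsub>grp E (n-1)\<^esub> \<beta> y1) \<otimes>\<^bsub>grp E (n-1)\<^esub> (\<alpha> x2 \<otimes>\<^bsub>grp E (n-1)\<^esub> \<beta> y2)"
        using ca cb by (simp add: EG.m_assoc)
      finally show "bd ES n (z \<otimes>\<^bsub>inrP (grp H n) (grp G n)\<^esub> w) = bd ES n z \<otimes>\<^bsub>grp ES (n-1)\<^esub> bd ES n w"
        using xy ES_grp_ne n1 by (simp add: ES_bd_n)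
    qed
  qed
qed


lemma ES_carrier_ne: "k \<noteq> n \<Longrightarrow> carrier (grp ES k) = Inl ` carrier (grp E k)"
  using ES_grp_ne by simp
lemma ES_carrier_n: "carrier (grp ES n) = Inr ` (carrier (grp H n) \<times> carrier (grp G n))"
  using ES_grp_n by simp
lemma ES_mult_ne: "k \<noteq> n \<Longrightarrow> Inl a \<otimes>\<^bsub>grp ES k\<^esub> Inl b = Inl (a \<otimes>\<^bsub>grp E k\<^esub> b)"
  using ES_grp_ne by simp
lemma ES_one_ne: "k \<noteq> n \<Longrightarrow> \<one>\<^bsub>grp ES k\<^esub> = Inl \<one>\<^bsub>grp E k\<^esub>"
  using ES_grp_ne by simp
lemma ES_inv_ne: "k \<noteq> n \<Longrightarrow> 1 \<le> k \<Longrightarrow> k \<le> n - 1 \<Longrightarrow> a \<in> carrier (grp E k) \<Longrightarrow>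
   inv\<^bsub>grp ES k\<^esub> (Inl a) = Inl (inv\<^bsub>grp E k\<^esub> a)"
  using ES_grp_ne inlG_inv[OF gE] by simp

lemma pa1: "a \<in> carrier (grp E 1) \<Longrightarrow> p 1 a \<in> carrier (grp H 1)"
  using hom_in_carrier[OF ccmor_hom[OF pE]] n3 by auto
lemma fa1: "a \<in> carrier (grp E 1) \<Longrightarrow> f 1 a \<in> carrier (grp G 1)"
  using hom_in_carrier[OF ccmor_hom[OF fE]] n3 by auto

lemma r4: "\<forall>k\<in>{2..n}. \<forall>a\<in>carrier (grp ES 1). (\<lambda>x. act ES k x a) \<in> hom (grp ES k) (grp ES k)"
proof (intro ballI)
  fix k a assume k: "k \<in> {2..n}" and a: "a \<in> carrier (grp ES 1)"
  then obtain a' where a': "a' \<in> carrier (grp E 1)" "a = Inl a'" using ES_carrier_ne n1 by auto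
  have k2: "2 \<le> k" using k by simp
  show "(\<lambda>x. act ES k x a) \<in> hom (grp ES k) (grp ES k)"
  proof (cases "k = n")
    case False
    have kn: "k \<le> n-1" using k False by auto
    have eq: "(\<lambda>x. act ES k x a) = (\<lambda>z. Inl (act E k (projl z) a'))" using ES_act_ne[OF False] a' by auto
    show ?thesis unfolding eq ES_grp_ne[OF False] by (rule inlG_hom[OF rcc_act_hom[OF bE k2 kn a'(1)]])
  next
    case True
    have eq: "(\<lambda>x. act ES n x a) = (\<lambda>z. Inr (act H n (fst (projr z)) (p 1 a'), act G n (snd (projr z)) (f 1 a')))"
      using ES_act_n a' by auto
    have n2: "2 \<le> n" using n3 by simp
    show ?thesis unfolding True eq ES_grp_n
      by (rule inrP_hom[OF rcc_act_hom[OF rH n2 order_refl pa1[OF a'(1)]] rcc_act_hom[OF rG n2 order_refl fa1[OF a'(1)]]])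
  qed
qed

lemma r5: "\<forall>k\<in>{2..n}. \<forall>x\<in>carrier (grp ES k). act ES k x \<one>\<^bsub>grp ES 1\<^esub> = x"
proof (intro ballI)
  fix k x assume k: "k \<in> {2..n}" and x: "x \<in> carrier (grp ES k)"
  have o: "\<one>\<^bsub>grp ES 1\<^esub> = Inl \<one>\<^bsub>grp E 1\<^esub>" using ES_one_ne n1 by simp
  show "act ES k x \<one>\<^bsub>grp ES 1\<^esub> = x"
  proof (cases "k = n")
    case False
    then obtain x' where x': "x' \<in> carrier (grp E k)" "x = Inl x'" using x ES_carrier_ne by auto
    have kn: "k \<le> n-1" using k False by auto
    show ?thesis using ES_act_ne[OF False] o x' rcc_act_one[OF bE _ kn x'(1)] k by simp
  next
    case True
    then obtain u v where uv: "u \<in> carrier (grp H n)" "v \<in> carrier (grp G n)" "x = Inr (u, v)"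
      using x ES_carrier_n by auto
    show ?thesis using True ES_act_n o uv p1_one f1_one rcc_act_one[OF rH _ order_refl uv(1)]
      rcc_act_one[OF rG _ order_refl uv(2)] n3 by simp
  qed
qed

lemma r6: "\<forall>k\<in>{2..n}. \<forall>x\<in>carrier (grp ES k). \<forall>a\<in>carrier (grp ES 1). \<forall>b\<in>carrier (grp ES 1).
      act ES k (act ES k x a) b = act ES k x (a \<otimes>\<^bsub>grp ES 1\<^esub> b)"
proof (intro ballI)
  fix k x a b assume k: "k \<in> {2..n}" and x: "x \<in> carrier (grp ES k)"
    and a: "a \<in> carrier (grp ES 1)" and b: "b \<in> carrier (grp ES 1)"
  obtain a' where a': "a' \<in> carrier (grp E 1)" "a = Inl a'" using a ES_carrier_ne n1 by auto
  obtain b' where b': "b' \<in> carrier (grp E 1)" "b = Inl b'" using b ES_carrier_ne n1 by auto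
  have ab: "a \<otimes>\<^bsub>grp ES 1\<^esub> b = Inl (a' \<otimes>\<^bsub>grp E 1\<^esub> b')" using a' b' ES_mult_ne n1 by simp
  show "act ES k (act ES k x a) b = act ES k x (a \<otimes>\<^bsub>grp ES 1\<^esub> b)"
  proof (cases "k = n")
    case False
    then obtain x' where x': "x' \<in> carrier (grp E k)" "x = Inl x'" using x ES_carrier_ne by auto
    have kn: "k \<le> n-1" using k False by auto
    show ?thesis using ES_act_ne[OF False] ab a' b' x' rcc_act_comp[OF bE _ kn x'(1) a'(1) b'(1)] k by simp
  next
    case True
    then obtain u v where uv: "u \<in> carrier (grp H n)" "v \<in> carrier (grp G n)" "x = Inr (u, v)"
      using x ES_carrier_n by auto
    have pm: "p 1 (a' \<otimes>\<^bsub>grp E 1\<^esub> b') = p 1 a' \<otimes>\<^bsub>grp H 1\<^esub> p 1 b'"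
      using hom_mult[OF ccmor_hom[OF pE] a'(1) b'(1)] n3 by auto
    have fm: "f 1 (a' \<otimes>\<^bsub>grp E 1\<^esub> b') = f 1 a' \<otimes>\<^bsub>grp G 1\<^esub> f 1 b'"
      using hom_mult[OF ccmor_hom[OF fE] a'(1) b'(1)] n3 by auto
    have n2: "2 \<le> n" using n3 by simp
    show ?thesis using True ES_act_n ab a' b' uv pm fm
      rcc_act_comp[OF rH n2 order_refl uv(1) pa1[OF a'(1)] pa1[OF b'(1)]]
      rcc_act_comp[OF rG n2 order_refl uv(2) fa1[OF a'(1)] fa1[OF b'(1)]] by simp
  qed
qed

lemma r7: "2 \<le> n \<longrightarrow>
     (\<forall>x\<in>carrier (grp ES 2). \<forall>a\<in>carrier (grp ES 1).
        bd ES 2 (act ES 2 x a) = inv\<^bsub>grp ES 1\<^esub> a \<otimes>\<^bsub>grp ES 1\<^esub> bd ES 2 x \<otimes>\<^bsub>grp ES 1\<^esub> a) \<and>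
     (\<forall>x\<in>carrier (grp ES 2). \<forall>y\<in>carrier (grp ES 2).
        act ES 2 x (bd ES 2 y) = inv\<^bsub>grp ES 2\<^esub> y \<otimes>\<^bsub>grp ES 2\<^esub> x \<otimes>\<^bsub>grp ES 2\<^esub> y)"
proof (intro impI conjI ballI)
  have n2: "2 \<le> n - 1" using n3 by simp
  have g1: "group (grp E 1)" and g2: "group (grp E 2)" using gE n3 by auto
  fix x a assume x: "x \<in> carrier (grp ES 2)" and a: "a \<in> carrier (grp ES 1)"
  obtain a' where a': "a' \<in> carrier (grp E 1)" "a = Inl a'" using a ES_carrier_ne n1 by auto
  obtain x' where x': "x' \<in> carrier (grp E 2)" "x = Inl x'" using x ES_carrier_ne n1 by auto
  have bx: "bd E 2 x' \<in> carrier (grp E 1)" using hom_in_carrier[OF rcc_bd_hom[OF bE _ n2] x'(1)] by (simp add: One_nat_def)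
  show "bd ES 2 (act ES 2 x a) = inv\<^bsub>grp ES 1\<^esub> a \<otimes>\<^bsub>grp ES 1\<^esub> bd ES 2 x \<otimes>\<^bsub>grp ES 1\<^esub> a"
    using ES_bd_ne ES_act_ne ES_mult_ne ES_inv_ne[of 1 a'] n1 n3 a' x' rcc_cm1[OF bE n2 x'(1) a'(1)]
      group.inv_closed[OF g1 a'(1)] bx by simp
next
  have n2: "2 \<le> n - 1" using n3 by simp
  have g2: "group (grp E 2)" using gE n3 by auto
  fix x y assume x: "x \<in> carrier (grp ES 2)" and y: "y \<in> carrier (grp ES 2)"
  obtain x' where x': "x' \<in> carrier (grp E 2)" "x = Inl x'" using x ES_carrier_ne n1 by auto
  obtain y' where y': "y' \<in> carrier (grp E 2)" "y = Inl y'" using y ES_carrier_ne n1 by auto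
  show "act ES 2 x (bd ES 2 y) = inv\<^bsub>grp ES 2\<^esub> y \<otimes>\<^bsub>grp ES 2\<^esub> x \<otimes>\<^bsub>grp ES 2\<^esub> y"
    using ES_bd_ne ES_act_ne ES_mult_ne ES_inv_ne[of 2 y'] n1 n3 x' y' rcc_cm2[OF bE n2 x'(1) y'(1)]
      group.inv_closed[OF g2 y'(1)] by simp
qed

lemma r8: "\<forall>k\<in>{3..n}. \<forall>x\<in>carrier (grp ES k). \<forall>a\<in>carrier (grp ES 1).
      bd ES k (act ES k x a) = act ES (k-1) (bd ES k x) a"
proof (intro ballI)
  fix k x a assume k: "k \<in> {3..n}" and x: "x \<in> carrier (grp ES k)" and a: "a \<in> carrier (grp ES 1)"
  obtain a' where a': "a' \<in> carrier (grp E 1)" "a = Inl a'" using a ES_carrier_ne n1 by auto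
  have k1: "k - 1 \<noteq> n" using k by auto
  show "bd ES k (act ES k x a) = act ES (k-1) (bd ES k x) a"
  proof (cases "k = n")
    case False
    then obtain x' where x': "x' \<in> carrier (grp E k)" "x = Inl x'" using x ES_carrier_ne by auto
    have kn: "k \<le> n-1" using k False by auto
    show ?thesis using ES_act_ne[OF False] ES_act_ne[OF k1] ES_bd_ne[OF False] a' x'
       rcc_bd_act[OF bE _ kn x'(1) a'(1)] k by simp
  next
    case True
    then obtain u v where uv: "u \<in> carrier (grp H n)" "v \<in> carrier (grp G n)" "x = Inr (u, v)"
      using x ES_carrier_n by auto
    have n2: "2 \<le> n - 1" using n3 by simp
    have "act E (n-1) (\<alpha> u \<otimes>\<^bsub>grp E (n-1)\<^esub> \<beta> v) a' = act E (n-1) (\<alpha> u) a' \<otimes>\<^bsub>grp E (n-1)\<^esub> act E (n-1) (\<beta> v) a'"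
      using hom_mult[OF rcc_act_hom[OF bE n2 order_refl a'(1)] hom_in_carrier[OF \<alpha>h uv(1)] hom_in_carrier[OF \<beta>h uv(2)]] by simp
    then show ?thesis using True ES_act_n ES_act_ne[OF k1] ES_bd_n a' uv B4a[OF a'(1) uv(1)] B4b[OF a'(1) uv(2)] by simp
  qed
qed

lemma r9: "\<forall>k\<in>{3..n}. \<forall>x\<in>carrier (grp ES k). bd ES (k-1) (bd ES k x) = \<one>\<^bsub>grp ES (k-2)\<^esub>"
proof (intro ballI)
  fix k x assume k: "k \<in> {3..n}" and x: "x \<in> carrier (grp ES k)"
  have k1: "k - 1 \<noteq> n" "k - 2 \<noteq> n" using k by auto
  show "bd ES (k-1) (bd ES k x) = \<one>\<^bsub>grp ES (k-2)\<^esub>"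
  proof (cases "k = n")
    case False
    then obtain x' where x': "x' \<in> carrier (grp E k)" "x = Inl x'" using x ES_carrier_ne by auto
    have kn: "k \<le> n-1" using k False by auto
    show ?thesis using ES_bd_ne[OF False] ES_bd_ne[OF k1(1)] ES_one_ne[OF k1(2)] x'
       rcc_bdbd[OF bE _ kn x'(1)] k by simp
  next
    case True
    then obtain u v where uv: "u \<in> carrier (grp H n)" "v \<in> carrier (grp G n)" "x = Inr (u, v)"
      using x ES_carrier_n by auto
    show ?thesis using True ES_bd_n ES_bd_ne[OF k1(1)] ES_one_ne[OF k1(2)] uv B3a[OF uv(1,2)] by simp
  qed
qed

lemma r10: "\<forall>k\<in>{3..n}. \<forall>x\<in>carrier (grp ES k). \<forall>y\<in>carrier (grp ES 2). act ES k x (bd ES 2 y) = x"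
proof (intro ballI)
  fix k x y assume k: "k \<in> {3..n}" and x: "x \<in> carrier (grp ES k)" and y: "y \<in> carrier (grp ES 2)"
  obtain y' where y': "y' \<in> carrier (grp E 2)" "y = Inl y'" using y ES_carrier_ne n1 by auto
  show "act ES k x (bd ES 2 y) = x"
  proof (cases "k = n")
    case False
    then obtain x' where x': "x' \<in> carrier (grp E k)" "x = Inl x'" using x ES_carrier_ne by auto
    have kn: "k \<le> n-1" using k False by auto
    show ?thesis using ES_act_ne[OF False] ES_bd_ne n1 x' y' rcc_triv[OF bE _ kn x'(1) y'(1)] k by simp
  next
    case True
    then obtain u v where uv: "u \<in> carrier (grp H n)" "v \<in> carrier (grp G n)" "x = Inr (u, v)"
      using x ES_carrier_n by auto
    have n2: "2 \<le> n - 1" using n3 by simp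
    have pb: "p 1 (bd E 2 y') = bd H 2 (p 2 y')" using ccmor_bd[OF pE _ n2 y'(1)] by (simp add: One_nat_def)
    have fb: "f 1 (bd E 2 y') = bd G 2 (f 2 y')" using ccmor_bd[OF fE _ n2 y'(1)] by (simp add: One_nat_def)
    have p2: "p 2 y' \<in> carrier (grp H 2)" using hom_in_carrier[OF ccmor_hom[OF pE _ n2] y'(1)] by simp
    have f2: "f 2 y' \<in> carrier (grp G 2)" using hom_in_carrier[OF ccmor_hom[OF fE _ n2] y'(1)] by simp
    show ?thesis using True ES_act_n ES_bd_ne n1 uv y' pb fb
      rcc_triv[OF rH n3 order_refl uv(1) p2] rcc_triv[OF rG n3 order_refl uv(2) f2] by simp
  qed
qed

lemma rES: "rcc n ES"
  unfolding rcc_def using r1 r2 r3 r4 r5 r6 r7 r8 r9 r10 n3 by simp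


lemma pstar_ne: "k \<noteq> n \<Longrightarrow> pstar n p k (z :: 'e + 'h \<times> 'g) = p k (projl z)" by (simp add: pstar_def)
lemma pstar_n: "pstar n p n (z :: 'e + 'h \<times> 'g) = fst (projr z)" by (simp add: pstar_def)

lemma c1: "\<forall>k\<in>{1..n}. pstar n p k \<in> hom (grp ES k) (grp H k)"
proof
  fix k assume k: "k \<in> {1..n}"
  show "pstar n p k \<in> hom (grp ES k) (grp H k)"
  proof (cases "k = n")
    case False
    have kn: "k \<le> n-1" using k False by auto
    have eq: "(pstar n p k :: 'e + 'h \<times> 'g \<Rightarrow> 'h) = (\<lambda>z. p k (projl z))" using pstar_ne[OF False] by (rule ext)
    show ?thesis unfolding eq ES_grp_ne[OF False]
      by (rule inlG_hom_out[OF ccmor_hom[OF pE _ kn]]) (use k in simp)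
  next
    case True
    have eq: "(pstar n p n :: 'e + 'h \<times> 'g \<Rightarrow> 'h) = (\<lambda>z. fst (projr z))" using pstar_n by (rule ext)
    show ?thesis unfolding True eq ES_grp_n by (rule inrP_fst_hom)
  qed
qed

lemma c2: "\<forall>k\<in>{2..n}. \<forall>x\<in>carrier (grp ES k). pstar n p (k-1) (bd ES k x) = bd H k (pstar n p k x)"
proof (intro ballI)
  fix k x assume k: "k \<in> {2..n}" and x: "x \<in> carrier (grp ES k)"
  have k1: "k - 1 \<noteq> n" using k by auto
  show "pstar n p (k-1) (bd ES k x) = bd H k (pstar n p k x)"
  proof (cases "k = n")
    case False
    then obtain x' where x': "x' \<in> carrier (grp E k)" "x = Inl x'" using x ES_carrier_ne by auto
    have kn: "k \<le> n-1" using k False by auto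
    show ?thesis using pstar_ne[OF False] pstar_ne[OF k1] ES_bd_ne[OF False] x' ccmor_bd[OF pE _ kn x'(1)] k
      by simp
  next
    case True
    then obtain u v where uv: "u \<in> carrier (grp H n)" "v \<in> carrier (grp G n)" "x = Inr (u, v)"
      using x ES_carrier_n by auto
    have n1': "1 \<le> n - 1" using n3 by simp
    have "p (n-1) (\<alpha> u \<otimes>\<^bsub>grp E (n-1)\<^esub> \<beta> v) = p (n-1) (\<alpha> u) \<otimes>\<^bsub>grp H (n-1)\<^esub> p (n-1) (\<beta> v)"
      using hom_mult[OF ccmor_hom[OF pE n1' order_refl] hom_in_carrier[OF \<alpha>h uv(1)] hom_in_carrier[OF \<beta>h uv(2)]] .
    also have "\<dots> = bd H n u" using p\<alpha>[OF uv(1)] \<beta>cyc[OF uv(2)]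
        hom_in_carrier[OF rcc_bd_hom[OF rH _ order_refl] uv(1)] gH[OF n1'] n3
      by (simp add: monoid.r_one group.is_monoid)
    finally show ?thesis using True pstar_ne[OF k1] pstar_n ES_bd_n uv by simp
  qed
qed

lemma c3: "\<forall>k\<in>{2..n}. \<forall>x\<in>carrier (grp ES k). \<forall>a\<in>carrier (grp ES 1).
      pstar n p k (act ES k x a) = act H k (pstar n p k x) (pstar n p 1 a)"
proof (intro ballI)
  fix k x a assume k: "k \<in> {2..n}" and x: "x \<in> carrier (grp ES k)" and a: "a \<in> carrier (grp ES 1)"
  obtain a' where a': "a' \<in> carrier (grp E 1)" "a = Inl a'" using a ES_carrier_ne n1 by auto
  have pa: "pstar n p 1 a = p 1 a'" using pstar_ne n1 a' by simp
  show "pstar n p k (act ES k x a) = act H k (pstar n p k x) (pstar n p 1 a)"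
  proof (cases "k = n")
    case False
    then obtain x' where x': "x' \<in> carrier (grp E k)" "x = Inl x'" using x ES_carrier_ne by auto
    have kn: "k \<le> n-1" using k False by auto
    show ?thesis using pstar_ne[OF False] ES_act_ne[OF False] pa x' a' ccmor_act[OF pE _ kn x'(1) a'(1)] k
      by simp
  next
    case True
    then obtain u v where uv: "u \<in> carrier (grp H n)" "v \<in> carrier (grp G n)" "x = Inr (u, v)"
      using x ES_carrier_n by auto
    show ?thesis using True pstar_n ES_act_n pa uv a' by simp
  qed
qed

lemma pmor: "ccmor n ES H (pstar n p)"
  unfolding ccmor_def using c1 c2 c3 by blast

lemma S_low: "1 \<le> k \<Longrightarrow> k \<le> n-1 \<Longrightarrow> h \<in> cyc H k \<Longrightarrow> \<exists>e\<in>cyc E k. p k e = h"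
proof -
  assume k1: "1 \<le> k" and kn: "k \<le> n-1" and h: "h \<in> cyc H k"
  show ?thesis
  proof (cases "k = 1")
    case True
    then have "h \<in> p 1 ` carrier (grp E 1)" using uS[OF k1 kn] h by (simp add: u_surj_def cyc_def)
    then obtain e where "e \<in> carrier (grp E 1)" "p 1 e = h" by blast
    then show ?thesis using True by (auto simp: cyc_def)
  next
    case False
    have hc: "h \<in> carrier (grp H k)" and hb: "bd H k h = \<one>\<^bsub>grp H (k-1)\<^esub>" using h False by (auto simp: cyc_def)
    have k1': "1 \<le> k - 1" "k - 1 \<le> n - 1" using False k1 kn by auto
    have o: "\<one>\<^bsub>grp E (k-1)\<^esub> \<in> cyc E (k-1)" using subgroup.one_closed[OF cyc_subgroup[OF bE k1']] .
    have po: "p (k-1) \<one>\<^bsub>grp E (k-1)\<^esub> = \<one>\<^bsub>grp H (k-1)\<^esub>"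
      using hom_one[OF ccmor_hom[OF pE k1'] gE[OF k1'] gH] k1' n3 by auto
    have "(\<one>\<^bsub>grp E (k-1)\<^esub>, h) \<in> fibprod E H p k" using o hc hb po by (simp add: fibprod_def)
    then have "(\<one>\<^bsub>grp E (k-1)\<^esub>, h) \<in> (\<lambda>x. (bd E k x, p k x)) ` carrier (grp E k)"
      using uS[OF k1 kn] False unfolding u_surj_def by simp
    then obtain x where x: "x \<in> carrier (grp E k)" "bd E k x = \<one>\<^bsub>grp E (k-1)\<^esub>" "p k x = h"
      by (auto simp: image_iff)
    then show ?thesis using False by (auto simp: cyc_def)
  qed
qed

lemma surj_low: "1 \<le> k \<Longrightarrow> k \<le> n-1 \<Longrightarrow> p k ` carrier (grp E k) = carrier (grp H k)"
proof -
  assume k1: "1 \<le> k" and kn: "k \<le> n-1"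
  show ?thesis
  proof (cases "k = 1")
    case True
    then show ?thesis using uS[OF k1 kn] by (simp add: u_surj_def)
  next
    case False
    show ?thesis
    proof
      show "p k ` carrier (grp E k) \<subseteq> carrier (grp H k)" using hom_carrier[OF ccmor_hom[OF pE k1 kn]] .
    next
      show "carrier (grp H k) \<subseteq> p k ` carrier (grp E k)"
      proof
        fix h assume hc: "h \<in> carrier (grp H k)"
        have k2: "2 \<le> k" using False k1 by simp
        have k1': "1 \<le> k - 1" "k - 1 \<le> n - 1" using False k1 kn by auto
        have bc: "bd H k h \<in> carrier (grp H (k-1))" using hom_in_carrier[OF rcc_bd_hom[OF rH k2] hc] kn by simp
        have "bd H k h \<in> cyc H (k-1)"
        proof (cases "k - 1 = 1")
          case True then show ?thesis using bc by (simp add: cyc_def)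
        next
          case False
          then have "bd H (k-1) (bd H k h) = \<one>\<^bsub>grp H (k-2)\<^esub>" using rcc_bdbd[OF rH _ _ hc] k2 kn by simp
          then show ?thesis using bc False by (simp add: cyc_def diff_diff_left)
        qed
        then obtain e where e: "e \<in> cyc E (k-1)" "p (k-1) e = bd H k h" using S_low[OF k1'] by blast
        have "(e, h) \<in> fibprod E H p k" using e hc by (simp add: fibprod_def)
        then have "(e, h) \<in> (\<lambda>x. (bd E k x, p k x)) ` carrier (grp E k)"
          using uS[OF k1 kn] False unfolding u_surj_def by simp
        then obtain x where x: "x \<in> carrier (grp E k)" "p k x = h"
          by (auto simp: image_iff)
        then show "h \<in> p k ` carrier (grp E k)" by blast
      qed
    qed
  qed
qed

lemma pfib: "fibration n ES H (pstar n p)"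
  unfolding fibration_def
proof (intro conjI pmor ballI)
  fix k assume k: "k \<in> {1..n}"
  show "pstar n p k ` carrier (grp ES k) = carrier (grp H k)"
  proof (cases "k = n")
    case False
    have kn: "k \<le> n-1" using k False by auto
    have "pstar n p k ` carrier (grp ES k) = p k ` carrier (grp E k)"
      using ES_carrier_ne[OF False] pstar_ne[OF False] by (auto simp: image_iff)
    then show ?thesis using surj_low[OF _ kn] k by simp
  next
    case True
    have o: "\<one>\<^bsub>grp G n\<^esub> \<in> carrier (grp G n)" using group.is_monoid[OF gG] monoid.one_closed n3 by auto
    have "pstar n p n ` carrier (grp ES n) = carrier (grp H n)"
    proof
      show "pstar n p n ` carrier (grp ES n) \<subseteq> carrier (grp H n)" using ES_carrier_n pstar_n by auto
    next
      show "carrier (grp H n) \<subseteq> pstar n p n ` carrier (grp ES n)"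
      proof
        fix u assume "u \<in> carrier (grp H n)"
        then have "Inr (u, \<one>\<^bsub>grp G n\<^esub>) \<in> carrier (grp ES n)" using o ES_carrier_n by auto
        then show "u \<in> pstar n p n ` carrier (grp ES n)" using pstar_n by (metis fst_conv image_eqI sum.sel(2))
      qed
    qed
    then show ?thesis using True by simp
  qed
qed


lemma cycES_ne: "k \<noteq> n \<Longrightarrow> 1 \<le> k \<Longrightarrow> k \<le> n \<Longrightarrow> cyc ES k = Inl ` cyc E k"
proof -
  assume kn: "k \<noteq> n" and k1: "1 \<le> k" and kn2: "k \<le> n"
  show ?thesis
  proof (cases "k = 1")
    case True then show ?thesis using ES_carrier_ne[OF kn] by (simp add: cyc_def)
  next
    case False
    have k1': "k - 1 \<noteq> n" using kn2 k1 n3 by auto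
    show ?thesis using False ES_carrier_ne[OF kn] ES_one_ne[OF k1'] ES_bd_ne[OF kn]
      by (auto simp: cyc_def)
  qed
qed

lemma gEn: "group (grp E (n-1))" using gE n3 by simp
lemma gHn: "group (grp H n)" using gH n3 by simp
lemma gGn: "group (grp G n)" using gG n3 by simp
lemma gHn1: "group (grp H (n-1))" using gH n3 by simp

lemma \<alpha>one: "\<alpha> \<one>\<^bsub>grp H n\<^esub> = \<one>\<^bsub>grp E (n-1)\<^esub>" using hom_one[OF \<alpha>h gHn gEn] .
lemma \<beta>one: "\<beta> \<one>\<^bsub>grp G n\<^esub> = \<one>\<^bsub>grp E (n-1)\<^esub>" using hom_one[OF \<beta>h gGn gEn] .

lemma bd\<alpha>: "x \<in> carrier (grp H n) \<Longrightarrow> bd E (n-1) (\<alpha> x) = \<one>\<^bsub>grp E (n-2)\<^esub>"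
proof -
  assume x: "x \<in> carrier (grp H n)"
  have "bd E (n-1) (\<alpha> x \<otimes>\<^bsub>grp E (n-1)\<^esub> \<beta> \<one>\<^bsub>grp G n\<^esub>) = \<one>\<^bsub>grp E (n-2)\<^esub>"
    using B3a[OF x monoid.one_closed[OF group.is_monoid[OF gGn]]] .
  then show ?thesis using \<beta>one hom_in_carrier[OF \<alpha>h x] gEn by (simp add: monoid.r_one group.is_monoid)
qed

lemma Sn: "\<forall>w\<in>cyc H n. \<exists>x\<in>cyc ES n. pstar n p n x = w"
proof
  fix w assume w: "w \<in> cyc H n"
  have wc: "w \<in> carrier (grp H n)" and wb: "bd H n w = \<one>\<^bsub>grp H (n-1)\<^esub>" using w n1 by (auto simp: cyc_def)
  have ac: "\<alpha> w \<in> carrier (grp E (n-1))" using hom_in_carrier[OF \<alpha>h wc] .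
  have "\<alpha> w \<in> {x\<in>carrier (grp E (n-1)). bd E (n-1) x = \<one>\<^bsub>grp E (n-2)\<^esub> \<and> p (n-1) x = \<one>\<^bsub>grp H (n-1)\<^esub>}"
    using ac bd\<alpha>[OF wc] p\<alpha>[OF wc] wb by simp
  then obtain y0 where y0: "y0 \<in> carrier (grp G n)" "\<beta> y0 = \<alpha> w" using \<beta>img by (metis imageE)
  have iy: "inv\<^bsub>grp G n\<^esub> y0 \<in> carrier (grp G n)" using group.inv_closed[OF gGn y0(1)] .
  have bi: "\<beta> (inv\<^bsub>grp G n\<^esub> y0) = inv\<^bsub>grp E (n-1)\<^esub> (\<alpha> w)"
    using group_hom.hom_inv[of "grp G n" "grp E (n-1)" \<beta> y0] gGn gEn \<beta>h y0
    by (simp add: group_hom_def group_hom_axioms_def)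
  have "\<alpha> w \<otimes>\<^bsub>grp E (n-1)\<^esub> \<beta> (inv\<^bsub>grp G n\<^esub> y0) = \<one>\<^bsub>grp E (n-1)\<^esub>"
    using bi group.r_inv[OF gEn ac] by simp
  then have "Inr (w, inv\<^bsub>grp G n\<^esub> y0) \<in> cyc ES n"
    using wc iy ES_carrier_n ES_bd_n ES_one_ne[OF n1(3)] n1 by (simp add: cyc_def)
  moreover have "pstar n p n (Inr (w, inv\<^bsub>grp G n\<^esub> y0)) = w" using pstar_n by simp
  ultimately show "\<exists>x\<in>cyc ES n. pstar n p n x = w" by blast
qed

lemma In: "\<forall>z\<in>cyc ES n. pstar n p n z \<in> bdry n H n \<longrightarrow> z \<in> bdry n ES n"
proof (intro ballI impI)
  fix z assume z: "z \<in> cyc ES n" and pz: "pstar n p n z \<in> bdry n H n"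
  then obtain u v where uv: "u \<in> carrier (grp H n)" "v \<in> carrier (grp G n)" "z = Inr (u, v)"
    and e: "\<alpha> u \<otimes>\<^bsub>grp E (n-1)\<^esub> \<beta> v = \<one>\<^bsub>grp E (n-1)\<^esub>"
    using ES_carrier_n ES_bd_n ES_one_ne[OF n1(3)] n1 by (auto simp: cyc_def)
  have u1: "u = \<one>\<^bsub>grp H n\<^esub>" using pz uv pstar_n by (simp add: bdry_def)
  have "\<beta> v = \<one>\<^bsub>grp E (n-1)\<^esub>" using e u1 \<alpha>one hom_in_carrier[OF \<beta>h uv(2)] gEn
    by (simp add: monoid.l_one group.is_monoid)
  then have "\<beta> v = \<beta> \<one>\<^bsub>grp G n\<^esub>" using \<beta>one by simp
  then have "v = \<one>\<^bsub>grp G n\<^esub>" using \<beta>inj uv(2) monoid.one_closed[OF group.is_monoid[OF gGn]]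
    by (auto simp: inj_on_def)
  then show "z \<in> bdry n ES n" using u1 uv ES_grp_n by (simp add: bdry_def)
qed

lemma Slow: "k \<noteq> n \<Longrightarrow> 1 \<le> k \<Longrightarrow> k \<le> n \<Longrightarrow> \<forall>w\<in>cyc H k. \<exists>x\<in>cyc ES k. pstar n p k x = w"
proof
  fix w assume kn: "k \<noteq> n" and k1: "1 \<le> k" and kn': "k \<le> n" and w: "w \<in> cyc H k"
  have "k \<le> n - 1" using kn kn' by simp
  then obtain e where e: "e \<in> cyc E k" "p k e = w" using S_low[OF k1 _ w] by blast
  then show "\<exists>x\<in>cyc ES k. pstar n p k x = w" using cycES_ne[OF kn k1 kn'] pstar_ne[OF kn] by auto
qed

lemma In1: "\<forall>z\<in>cyc ES (n-1). pstar n p (n-1) z \<in> bdry n H (n-1) \<longrightarrow> z \<in> bdry n ES (n-1)"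
proof (intro ballI impI)
  fix z assume z: "z \<in> cyc ES (n-1)" and pz: "pstar n p (n-1) z \<in> bdry n H (n-1)"
  have n1': "1 \<le> n - 1" using n3 by simp
  obtain e where e: "e \<in> cyc E (n-1)" "z = Inl e" using z cycES_ne[OF n1(3) n1' diff_le_self] by auto
  have ne: "n - 1 \<noteq> 1" using n3 by simp
  have "e \<in> carrier (grp E (n-1)) \<and> bd E (n-1) e = \<one>\<^bsub>grp E (n-1-1)\<^esub>" using e(1) ne unfolding cyc_def by simp
  then have ec: "e \<in> carrier (grp E (n-1))" and eb: "bd E (n-1) e = \<one>\<^bsub>grp E (n-2)\<^esub>"
    by (simp_all add: diff_diff_left)
  have nn: "n - 1 + 1 = n" using n3 by simp
  obtain x0 where x0: "x0 \<in> carrier (grp H n)" "p (n-1) e = bd H n x0"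
    using pz e pstar_ne[OF n1(3)] n1 nn by (auto simp: bdry_def)
  have ac: "\<alpha> x0 \<in> carrier (grp E (n-1))" using hom_in_carrier[OF \<alpha>h x0(1)] .
  have iac: "inv\<^bsub>grp E (n-1)\<^esub> (\<alpha> x0) \<in> carrier (grp E (n-1))" using group.inv_closed[OF gEn ac] .
  define e' where "e' = e \<otimes>\<^bsub>grp E (n-1)\<^esub> inv\<^bsub>grp E (n-1)\<^esub> (\<alpha> x0)"
  have e'c: "e' \<in> carrier (grp E (n-1))" using ec iac gEn by (simp add: e'_def monoid.m_closed group.is_monoid)
  have n2: "2 \<le> n - 1" using n3 by simp
  have nm: "n - 1 - 1 = n - 2" by simp
  have ghb: "group_hom (grp E (n-1)) (grp E (n-2)) (bd E (n-1))"
    using rcc_bd_hom[OF bE n2 order_refl] gEn gE[of "n-2"] n3 nm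
    by (simp add: group_hom_def group_hom_axioms_def)
  have gE2: "group (grp E (n-2))" using gE[of "n-2"] n3 by simp
  have "bd E (n-1) e' = bd E (n-1) e \<otimes>\<^bsub>grp E (n-2)\<^esub> inv\<^bsub>grp E (n-2)\<^esub> (bd E (n-1) (\<alpha> x0))"
    unfolding e'_def using group_hom.hom_mult[OF ghb ec iac] group_hom.hom_inv[OF ghb ac] by simp
  also have "\<dots> = \<one>\<^bsub>grp E (n-2)\<^esub>" using eb bd\<alpha>[OF x0(1)] gE2
    by (simp add: monoid.inv_one monoid.l_one group.is_monoid)
  finally have b': "bd E (n-1) e' = \<one>\<^bsub>grp E (n-2)\<^esub>" .
  have ghp: "group_hom (grp E (n-1)) (grp H (n-1)) (p (n-1))"
    using ccmor_hom[OF pE n1' order_refl] gEn gHn1 by (simp add: group_hom_def group_hom_axioms_def)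
  have bx: "bd H n x0 \<in> carrier (grp H (n-1))" using hom_in_carrier[OF rcc_bd_hom[OF rH _ order_refl] x0(1)] n3 by simp
  have "p (n-1) e' = p (n-1) e \<otimes>\<^bsub>grp H (n-1)\<^esub> inv\<^bsub>grp H (n-1)\<^esub> (p (n-1) (\<alpha> x0))"
    unfolding e'_def using group_hom.hom_mult[OF ghp ec iac] group_hom.hom_inv[OF ghp ac] by simp
  also have "\<dots> = \<one>\<^bsub>grp H (n-1)\<^esub>" using x0(2) p\<alpha>[OF x0(1)] group.r_inv[OF gHn1 bx] by simp
  finally have p': "p (n-1) e' = \<one>\<^bsub>grp H (n-1)\<^esub>" .
  have "e' \<in> {x\<in>carrier (grp E (n-1)). bd E (n-1) x = \<one>\<^bsub>grp E (n-2)\<^esub> \<and> p (n-1) x = \<one>\<^bsub>grp H (n-1)\<^esub>}"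
    using e'c b' p' by simp
  then obtain y0 where y0: "y0 \<in> carrier (grp G n)" "\<beta> y0 = e'" using \<beta>img by (metis imageE)
  have "e = e' \<otimes>\<^bsub>grp E (n-1)\<^esub> \<alpha> x0" unfolding e'_def using ec ac iac gEn
    by (simp add: monoid.m_assoc group.is_monoid group.l_inv monoid.r_one)
  also have "\<dots> = \<alpha> x0 \<otimes>\<^bsub>grp E (n-1)\<^esub> e'"
    using rcc_central[OF bE n2 order_refl ac] \<beta>cyc[OF y0(1)] y0(2) by simp
  finally have ee: "e = \<alpha> x0 \<otimes>\<^bsub>grp E (n-1)\<^esub> \<beta> y0" using y0(2) by simp
  have "Inr (x0, y0) \<in> carrier (grp ES n)" using ES_carrier_n x0 y0 by simp
  moreover have "z = bd ES n (Inr (x0, y0))" using ee e ES_bd_n by simp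
  ultimately show "z \<in> bdry n ES (n-1)" unfolding bdry_def if_not_P[OF n1(3)] nn by blast
qed

lemma Ilow: "1 \<le> k \<Longrightarrow> k + 2 \<le> n \<Longrightarrow> \<forall>z\<in>cyc ES k. pstar n p k z \<in> bdry n H k \<longrightarrow> z \<in> bdry n ES k"
proof (intro ballI impI)
  fix z assume k1: "1 \<le> k" and kn: "k + 2 \<le> n" and z: "z \<in> cyc ES k" and pz: "pstar n p k z \<in> bdry n H k"
  have kn0: "k \<noteq> n" "k + 1 \<noteq> n" using kn by auto
  have kn3: "k \<le> n" "k + 1 \<le> n - 1" "1 \<le> k + 1" using kn by auto
  obtain e where e: "e \<in> cyc E k" "z = Inl e" using z cycES_ne[OF kn0(1) k1 kn3(1)] by auto
  obtain h where h: "h \<in> carrier (grp H (k+1))" "p k e = bd H (k+1) h"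
    using pz e pstar_ne[OF kn0(1)] kn0 by (auto simp: bdry_def)
  have "(e, h) \<in> fibprod E H p (k+1)" using e h by (simp add: fibprod_def)
  then have "(e, h) \<in> (\<lambda>x. (bd E (k+1) x, p (k+1) x)) ` carrier (grp E (k+1))"
    using uS[OF kn3(3) kn3(2)] k1 unfolding u_surj_def by simp
  then obtain x where x: "x \<in> carrier (grp E (k+1))" "bd E (k+1) x = e" by (auto simp: image_iff)
  have "Inl x \<in> carrier (grp ES (k+1))" using ES_carrier_ne[OF kn0(2)] x by simp
  moreover have "z = bd ES (k+1) (Inl x)" using ES_bd_ne[OF kn0(2)] x e by simp
  ultimately show "z \<in> bdry n ES k" using kn0 by (simp add: bdry_def)
qed

lemma piso: "k \<in> {1..n} \<Longrightarrow> htpy_map n H (pstar n p) k \<in> iso (htpy n ES k) (htpy n H k)"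
proof -
  assume k: "k \<in> {1..n}"
  then have k1: "1 \<le> k" and kn: "k \<le> n" by auto
  show ?thesis
  proof (cases "k = n")
    case True
    then show ?thesis using htpy_map_iso[OF rES rH pmor k1 kn] Sn In by simp
  next
    case False
    note S = Slow[OF False k1 kn]
    show ?thesis
    proof (cases "k = n - 1")
      case True
      then show ?thesis using htpy_map_iso[OF rES rH pmor k1 kn S] In1 by simp
    next
      case False
      then have "k + 2 \<le> n" using \<open>k \<noteq> n\<close> kn by auto
      then show ?thesis using htpy_map_iso[OF rES rH pmor k1 kn S Ilow[OF k1]] by simp
    qed
  qed
qed

lemma ptriv: "triv_fib n ES H (pstar n p)"
  unfolding triv_fib_def weak_eq_def using pfib pmor piso by blast

end




theorem mainTheorem5:
  fixes n :: nat
    and H :: "'h xcx" and G :: "'g xcx" and E :: "'e xcx"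
    and p :: "nat \<Rightarrow> 'e \<Rightarrow> 'h" and f :: "nat \<Rightarrow> 'e \<Rightarrow> 'g"
    and \<alpha> :: "'h \<Rightarrow> 'e" and \<beta> :: "'g \<Rightarrow> 'e"
    and Q :: "'q xcx" and q :: "nat \<Rightarrow> 'q \<Rightarrow> 'h"
  assumes "3 \<le> n"
    and "rcc n H" and "rcc n G"
    and "butterfly n H G E p f \<alpha> \<beta>"
    and "cofibrant_wrt TYPE('e + 'h \<times> 'g) TYPE('h) n Q"
    and "triv_fib n Q H q"
  shows "\<exists>l. weak_eq n Q (Estar n H G E p f \<alpha> \<beta>) l \<and>
             (\<forall>k\<in>{1..n}. \<forall>x\<in>carrier (grp Q k). pstar n p k (l k x) = q k x)"
proof -
  let ?ES = "Estar n H G E p f \<alpha> \<beta>"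
  have rES: "rcc n ?ES" using rES[OF assms(1-4)] .
  have pt: "triv_fib n ?ES H (pstar n p)" using ptriv[OF assms(1-4)] .
  have rQ: "rcc n Q" using assms(5) unfolding cofibrant_wrt_def by blast
  have qw: "weak_eq n Q H q" and qm: "ccmor n Q H q" using assms(6) unfolding triv_fib_def fibration_def by auto
  have "\<exists>h. ccmor n Q ?ES h \<and> (\<forall>k\<in>{1..n}. \<forall>x\<in>carrier (grp Q k). pstar n p k (h k x) = q k x)"
    using assms(5) rES assms(2) pt qm unfolding cofibrant_wrt_def by blast
  then obtain l where l: "ccmor n Q ?ES l" and c: "\<forall>k\<in>{1..n}. \<forall>x\<in>carrier (grp Q k). pstar n p k (l k x) = q k x"
    by blast
  have pm: "ccmor n ?ES H (pstar n p)" using pt unfolding triv_fib_def fibration_def by blast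
  have "\<forall>k\<in>{1..n}. htpy_map n ?ES l k \<in> iso (htpy n Q k) (htpy n ?ES k)"
  proof
    fix k assume k: "k \<in> {1..n}"
    then have k1: "1 \<le> k" and kn: "k \<le> n" by auto
    have qi: "htpy_map n H q k \<in> iso (htpy n Q k) (htpy n H k)" using qw k unfolding weak_eq_def by blast
    have pi: "htpy_map n H (pstar n p) k \<in> iso (htpy n ?ES k) (htpy n H k)"
      using pt k unfolding triv_fib_def weak_eq_def by blast
    show "htpy_map n ?ES l k \<in> iso (htpy n Q k) (htpy n ?ES k)"
    proof (rule two_of_three[OF htpy_map_hom[OF rQ rES l k1 kn] qi pi])
      show "\<forall>S\<in>carrier (htpy n Q k). htpy_map n H q k S = htpy_map n H (pstar n p) k (htpy_map n ?ES l k S)"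
        using htpy_map_comp[OF rQ rES assms(2) l pm qm k1 kn] c k by blast
    qed
  qed
  then have "weak_eq n Q ?ES l" using l unfolding weak_eq_def by blast
  then show ?thesis using c by blast
qed


end
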